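(* Let $u$ generate a cyclic group of order $q$ (a power of 2) and let $0<\ell,k\le q/2$ be odd integers. Then there is a decomposition $V(2\ell)\otimes V(2k)=W\perp W'$ into $K[u]$-submodules $W,W'$ that are orthogonal with respect to the tensor product form, such that $W\cong\operatorname{Ind}_{\langle u^2\rangle}^{\langle u\rangle}(V_\ell\otimes V_k)\cong W'$ as $K[u]$-modules.
   Context: $K$ is algebraically closed of characteristic 2; $V_d$ is the $d$-dimensional indecomposable module for a cyclic 2-group (one unipotent Jordan block). For $d=2m$ even, $V(d)$ is $V_d$ with basis $e_1,\dots,e_d$, $ue_1=e_1$, $ue_i=e_i+\cdots+e_1$ ($2\le i\le m+1$), $ue_i=e_i+e_{i-1}$ ($m+1<i\le d$), form $b(e_i,e_j)=1$ iff $i+j=d+1$. The tensor product of bilinear modules $(V,b)\otimes(V',b')$ carries the form $(v_1\otimes v_1',v_2\otimes v_2')\mapsto b(v_1,v_2)b'(v_1',v_2')$. $\operatorname{Ind}_H^G(M)=K[G]\otimes_{K[H]}M$. *)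

theory Defs
  imports "Jordan_Normal_Form.Matrix" "HOL-Computational_Algebra.Polynomial"
begin

definition alg_closed :: "'a::field itself \<Rightarrow> bool" where
  "alg_closed _ \<longleftrightarrow> (\<forall>p::'a poly. degree p \<ge> 1 \<longrightarrow> (\<exists>x. poly p x = 0))"

(* Matrix of u on V(d), d = 2m, w.r.t. e_1..e_d (stored 0-based: e_{i+1} ~ index i).
   Column c is u e_{c+1}. *)
definition Vu :: "nat \<Rightarrow> 'a::field mat" where
  "Vu d = mat d d (\<lambda>(r,c). let m = d div 2; i = r + 1; j = c + 1 in
      if j = 1 then (if i = 1 then 1 else 0)
      else if j \<le> m + 1 then (if i \<le> j then 1 else 0)
      else (if i = j \<or> i + 1 = j then 1 else 0))"

definition Vform :: "nat \<Rightarrow> 'a::field mat" where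
  "Vform d = mat d d (\<lambda>(r,c). if (r + 1) + (c + 1) = d + 1 then 1 else 0)"

definition Jblock :: "nat \<Rightarrow> 'a::field mat" where
  "Jblock n = mat n n (\<lambda>(r,c). if r = c \<or> r + 1 = c then 1 else 0)"

(* Kronecker product; basis e_i (x) f_j stored at index i * dim B + j. *)
definition kron :: "'a::field mat \<Rightarrow> 'a mat \<Rightarrow> 'a mat" where
  "kron A B = mat (dim_row A * dim_row B) (dim_col A * dim_col B)
     (\<lambda>(i,j). A $$ (i div dim_row B, j div dim_col B) * B $$ (i mod dim_row B, j mod dim_col B))"

definition bil :: "'a::field mat \<Rightarrow> 'a vec \<Rightarrow> 'a vec \<Rightarrow> 'a" where
  "bil G x y = x \<bullet> (G *\<^sub>v y)"

(* Induction from the index-2 subgroup <u^2> to <u>: if u^2 acts on M (dim n) by A,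
   then Ind = 1(x)M (+) u(x)M and u acts by the block matrix [[0, A], [I, 0]]. *)
definition Ind2 :: "'a::field mat \<Rightarrow> 'a mat" where
  "Ind2 A = four_block_mat (0\<^sub>m (dim_row A) (dim_row A)) A (1\<^sub>m (dim_row A)) (0\<^sub>m (dim_row A) (dim_row A))"

definition subspace_of :: "nat \<Rightarrow> 'a::field vec set \<Rightarrow> bool" where
  "subspace_of n W \<longleftrightarrow> W \<subseteq> carrier_vec n \<and> 0\<^sub>v n \<in> W \<and>
     (\<forall>x\<in>W. \<forall>y\<in>W. x + y \<in> W) \<and> (\<forall>c. \<forall>x\<in>W. c \<cdot>\<^sub>v x \<in> W)"

definition submodule_of :: "'a::field mat \<Rightarrow> 'a vec set \<Rightarrow> bool" where
  "submodule_of U W \<longleftrightarrow> subspace_of (dim_row U) W \<and> (\<forall>w\<in>W. U *\<^sub>v w \<in> W)"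

definition module_iso :: "'a::field mat \<Rightarrow> 'a vec set \<Rightarrow> 'a mat \<Rightarrow> bool" where
  "module_iso U W T \<longleftrightarrow> (\<exists>f. bij_betw f W (carrier_vec (dim_row T)) \<and>
     (\<forall>x\<in>W. \<forall>y\<in>W. f (x + y) = f x + f y) \<and>
     (\<forall>c. \<forall>x\<in>W. f (c \<cdot>\<^sub>v x) = c \<cdot>\<^sub>v f x) \<and>
     (\<forall>x\<in>W. f (U *\<^sub>v x) = T *\<^sub>v f x))"

end

theory Submission
  imports Defs "Jordan_Normal_Form.Determinant"
begin

lemma sq_inv:
  fixes A :: "'a::field mat"
  assumes A: "A \<in> carrier_mat n n" and inj: "\<And>v. v \<in> carrier_vec n \<Longrightarrow> A *\<^sub>v v = 0\<^sub>v n \<Longrightarrow> v = 0\<^sub>v n"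
  shows "\<exists>B \<in> carrier_mat n n. A * B = 1\<^sub>m n \<and> B * A = 1\<^sub>m n"
proof -
  have "det A \<noteq> 0" using det_0_iff_vec_prod_zero_field[OF A] inj by blast
  from det_non_zero_imp_unit[OF A this, of "()"] show ?thesis
    unfolding Units_def ring_mat_def by auto
qed

lemma sum_pairs: "(\<Sum>c<2*(m::nat). f c) = (\<Sum>s<m. f (2*s) + f (2*s+1))"
  by (induction m) (auto simp: numeral_2_eq_2 add.assoc)

lemma sum_prod_idx: "(\<Sum>t<(a::nat)*b. f t) = (\<Sum>i<a. \<Sum>j<b. f (i*b+j))"
proof (induction a)
  case 0 then show ?case by simp
next
  case (Suc a)
  have "{..<Suc a * b} = {..<a*b} \<union> (\<lambda>j. a*b+j) ` {..<b}"
  proof (rule equalityI)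
    show "{..<Suc a * b} \<subseteq> {..<a*b} \<union> (\<lambda>j. a*b+j) ` {..<b}"
    proof
      fix x assume "x \<in> {..<Suc a*b}"
      then show "x \<in> {..<a*b} \<union> (\<lambda>j. a*b+j) ` {..<b}"
        by (cases "x < a*b") (auto simp: image_iff intro!: bexI[of _ "x - a*b"])
    qed
  qed auto
  moreover have "{..<a*b} \<inter> (\<lambda>j. a*b+j) ` {..<b} = {}" by auto
  ultimately have "(\<Sum>t<Suc a*b. f t) = (\<Sum>t<a*b. f t) + (\<Sum>j<b. f (a*b+j))"
    by (simp add: sum.union_disjoint sum.reindex inj_on_def)
  then show ?case using Suc by simp
qed

lemma kron_carrier: "A \<in> carrier_mat n1 m1 \<Longrightarrow> B \<in> carrier_mat n2 m2 \<Longrightarrow> kron A B \<in> carrier_mat (n1*n2) (m1*m2)"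
  unfolding kron_def by auto

lemma kron_index: "A \<in> carrier_mat n1 m1 \<Longrightarrow> B \<in> carrier_mat n2 m2 \<Longrightarrow> i < n1*n2 \<Longrightarrow> j < m1*m2 \<Longrightarrow>
  kron A B $$ (i,j) = A $$ (i div n2, j div m2) * B $$ (i mod n2, j mod m2)"
  unfolding kron_def by auto

lemma kron_mult:
  fixes A :: "'a::field mat"
  assumes A: "A \<in> carrier_mat n1 m1" and B: "B \<in> carrier_mat n2 m2"
    and C: "C \<in> carrier_mat m1 p1" and D: "D \<in> carrier_mat m2 p2"
  shows "kron A B * kron C D = kron (A*C) (B*D)"
proof (rule eq_matI)
  fix i j assume i: "i < dim_row (kron (A*C) (B*D))" and j: "j < dim_col (kron (A*C) (B*D))"
  have i': "i < n1*n2" and j': "j < p1*p2" using i j A B C D unfolding kron_def by auto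
  have n2: "n2 > 0" and p2: "p2 > 0" using i' j' by (auto intro: ccontr)
  have m: "\<And>a b. a < m1 \<Longrightarrow> b < m2 \<Longrightarrow> a*m2+b < m1*m2"
  proof -
    fix a b assume "a < m1" "b < m2"
    hence "a*m2+b < a*m2 + m2" by simp
    also have "\<dots> = (a+1)*m2" by simp
    also have "\<dots> \<le> m1*m2" using \<open>a < m1\<close> by (intro mult_right_mono) auto
    finally show "a*m2+b < m1*m2" .
  qed
  have "(kron A B * kron C D) $$ (i,j) = (\<Sum>t<m1*m2. kron A B $$ (i,t) * kron C D $$ (t,j))"
    using kron_carrier[OF A B] kron_carrier[OF C D] i' j'
    by (simp add: scalar_prod_def atLeast0LessThan)
  also have "\<dots> = (\<Sum>a<m1. \<Sum>b<m2. kron A B $$ (i,a*m2+b) * kron C D $$ (a*m2+b,j))"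
    by (rule sum_prod_idx)
  also have "\<dots> = (\<Sum>a<m1. \<Sum>b<m2. (A $$ (i div n2, a) * C $$ (a, j div p2)) * (B $$ (i mod n2, b) * D $$ (b, j mod p2)))"
  proof (intro sum.cong refl)
    fix a b assume a: "a \<in> {..<m1}" and b: "b \<in> {..<m2}"
    have ab: "a*m2+b < m1*m2" using m a b by auto
    show "kron A B $$ (i,a*m2+b) * kron C D $$ (a*m2+b,j) = (A $$ (i div n2, a) * C $$ (a, j div p2)) * (B $$ (i mod n2, b) * D $$ (b, j mod p2))"
      using kron_index[OF A B i' ab] kron_index[OF C D ab j'] b by (simp add: mult_ac)
  qed
  also have "\<dots> = (\<Sum>a<m1. A $$ (i div n2, a) * C $$ (a, j div p2)) * (\<Sum>b<m2. B $$ (i mod n2, b) * D $$ (b, j mod p2))"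
    by (simp add: sum_product)
  also have "\<dots> = kron (A*C) (B*D) $$ (i,j)"
    apply (subst kron_index[OF mult_carrier_mat[OF A C] mult_carrier_mat[OF B D] i' j'])
    using A B C D i' j' n2 p2
    by (simp add: scalar_prod_def atLeast0LessThan less_mult_imp_div_less)
  finally show "(kron A B * kron C D) $$ (i,j) = kron (A*C) (B*D) $$ (i,j)" .
qed (insert A B C D, auto simp: kron_def)

lemma kron_one: "kron (1\<^sub>m n) (1\<^sub>m m) = (1\<^sub>m (n*m) :: 'a::field mat)"
proof (rule eq_matI)
  fix i j assume "i < dim_row (1\<^sub>m (n*m) :: 'a mat)" "j < dim_col (1\<^sub>m (n*m) :: 'a mat)"
  hence i: "i < n*m" and j: "j < n*m" by auto
  have m: "m > 0" using i by (auto intro: ccontr)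
  have "(i div m = j div m \<and> i mod m = j mod m) = (i = j)"
    by (metis div_mult_mod_eq)
  then show "kron (1\<^sub>m n) (1\<^sub>m m) $$ (i,j) = (1\<^sub>m (n*m) :: 'a mat) $$ (i,j)"
    using kron_index[OF one_carrier_mat one_carrier_mat i j] i j m
    by (auto simp: less_mult_imp_div_less)
qed (auto simp: kron_def)

lemma kron_transpose: "A \<in> carrier_mat n1 m1 \<Longrightarrow> B \<in> carrier_mat n2 m2 \<Longrightarrow>
  transpose_mat (kron A B) = kron (transpose_mat A) (transpose_mat B)"
proof (rule eq_matI)
  fix i j assume A: "A \<in> carrier_mat n1 m1" and B: "B \<in> carrier_mat n2 m2"
    and i: "i < dim_row (kron (transpose_mat A) (transpose_mat B))" and j: "j < dim_col (kron (transpose_mat A) (transpose_mat B))"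
  have i': "i < m1*m2" and j': "j < n1*n2" using i j A B by (auto simp: kron_def)
  have "m2 > 0" "n2 > 0" using i' j' by (auto intro: ccontr)
  then show "transpose_mat (kron A B) $$ (i,j) = kron (transpose_mat A) (transpose_mat B) $$ (i,j)"
    using A B i' j' by (auto simp: kron_def less_mult_imp_div_less)
qed (auto simp: kron_def)

lemma mv_index: "A \<in> carrier_mat n m \<Longrightarrow> v \<in> carrier_vec m \<Longrightarrow> r < n \<Longrightarrow>
  (A *\<^sub>v v) $ r = (\<Sum>c<m. A $$ (r,c) * v $ c)"
  by (simp add: scalar_prod_def atLeast0LessThan)

lemma mm_index: "A \<in> carrier_mat n k \<Longrightarrow> B \<in> carrier_mat k p \<Longrightarrow> i < n \<Longrightarrow> j < p \<Longrightarrow>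
  (A * B) $$ (i,j) = (\<Sum>t<k. A $$ (i,t) * B $$ (t,j))"
  by (simp add: scalar_prod_def atLeast0LessThan)

lemma two_zero: "(2::'a::field) = 0 \<Longrightarrow> (x::'a) + x = 0"
  by (metis mult_2 mult_zero_left)

lemma Vu_carrier: "Vu d \<in> carrier_mat d d" unfolding Vu_def by auto
lemma Vu_dims[simp]: "dim_row (Vu d) = d" "dim_col (Vu d) = d" unfolding Vu_def by auto

lemma Vu_index: "r < d \<Longrightarrow> c < d \<Longrightarrow> Vu d $$ (r,c) = (if c = 0 then (if r = 0 then 1 else 0)
   else if c \<le> d div 2 then (if r \<le> c then 1 else 0) else (if r = c \<or> r + 1 = c then 1 else 0))"
  unfolding Vu_def by (auto simp: Let_def)

lemma Vu_low: "r < d \<Longrightarrow> c < r \<Longrightarrow> Vu d $$ (r,c) = 0"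
  by (simp add: Vu_index)
lemma Vu_diag: "r < d \<Longrightarrow> Vu d $$ (r,r) = 1"
  by (simp add: Vu_index)
lemma Vu_super: "r + 1 < d \<Longrightarrow> Vu d $$ (r,r+1) = 1"
  by (simp add: Vu_index)

definition Dop :: "nat \<Rightarrow> 'a::field vec \<Rightarrow> 'a vec" where "Dop d v = Vu d *\<^sub>v v - v"

lemma Dop_carrier: "v \<in> carrier_vec d \<Longrightarrow> Dop d v \<in> carrier_vec d"
  unfolding Dop_def by (rule minus_carrier_vec[OF mult_mat_vec_carrier[OF Vu_carrier]])

lemma Dop_index: "v \<in> carrier_vec d \<Longrightarrow> r < d \<Longrightarrow> Dop d v $ r = (Vu d *\<^sub>v v) $ r - v $ r"
  unfolding Dop_def using Vu_carrier by auto

lemma D_lower: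
  assumes v: "v \<in> carrier_vec d" and z: "\<forall>c<d. j < c \<longrightarrow> v $ c = 0" and r: "r < d" "j \<le> r"
  shows "Dop d v $ r = 0"
proof -
  have "(\<Sum>c<d. Vu d $$ (r,c) * v $ c) = (\<Sum>c<d. if c = r then v $ c else 0)"
  proof (rule sum.cong[OF refl])
    fix c assume c: "c \<in> {..<d}"
    show "Vu d $$ (r,c) * v $ c = (if c = r then v $ c else 0)"
      using Vu_low[OF r(1), of c] Vu_diag[OF r(1)] z c r by (cases "c < r"; cases "c = r"; auto)
  qed
  also have "\<dots> = v $ r" using r by (simp add: sum.delta')
  finally show ?thesis using Dop_index[OF v r(1)] mv_index[OF Vu_carrier v r(1)] by simp
qed

lemma D_top:
  assumes v: "v \<in> carrier_vec d" and z: "\<forall>c<d. j < c \<longrightarrow> v $ c = 0" and j: "0 < j" "j < d"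
  shows "Dop d v $ (j - 1) = v $ j"
proof -
  have r: "j - 1 < d" using j by auto
  have "(\<Sum>c<d. Vu d $$ (j-1,c) * v $ c) = (\<Sum>c<d. (if c = j - 1 then v $ c else 0) + (if c = j then v $ c else 0))"
  proof (rule sum.cong[OF refl])
    fix c assume c: "c \<in> {..<d}"
    show "Vu d $$ (j-1,c) * v $ c = (if c = j - 1 then v $ c else 0) + (if c = j then v $ c else 0)"
      using Vu_low[OF r, of c] Vu_diag[OF r] Vu_super[of "j-1" d] z c j by (cases "c < j - 1"; cases "c = j - 1"; cases "c = j"; auto)
  qed
  also have "\<dots> = v $ (j-1) + v $ j" using j by (simp add: sum.distrib sum.delta')
  finally show ?thesis using Dop_index[OF v r] mv_index[OF Vu_carrier v r] by simp
qed

fun gch :: "nat \<Rightarrow> nat \<Rightarrow> 'a::field vec" where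
  "gch d 0 = unit_vec d (d - 1)"
| "gch d (Suc s) = Dop d (gch d s)"

lemma gch_props:
  assumes d: "0 < d"
  shows "(gch d s :: 'a::field vec) \<in> carrier_vec d \<and> (\<forall>r<d. d \<le> r + s \<longrightarrow> (gch d s :: 'a vec) $ r = 0) \<and> (s < d \<longrightarrow> (gch d s :: 'a vec) $ (d - 1 - s) = 1)"
proof (induction s)
  case 0 then show ?case using d by simp
next
  case (Suc s)
  let ?v = "gch d s :: 'a vec"
  note v = Suc.IH[THEN conjunct1] and IH2 = Suc.IH[THEN conjunct2, THEN conjunct1]
    and IH3 = Suc.IH[THEN conjunct2, THEN conjunct2]
  have z: "\<forall>c<d. d - 1 - s < c \<longrightarrow> ?v $ c = 0"
  proof (intro allI impI)
    fix c assume c: "c < d" "d - 1 - s < c"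
    hence "d \<le> c + s" by linarith
    then show "?v $ c = 0" using IH2 c(1) by auto
  qed
  have A: "\<forall>r<d. d \<le> r + Suc s \<longrightarrow> (gch d (Suc s) :: 'a vec) $ r = 0"
  proof (intro allI impI)
    fix r assume r: "r < d" "d \<le> r + Suc s"
    hence "d - 1 - s \<le> r" by linarith
    from D_lower[OF v z r(1) this] show "(gch d (Suc s) :: 'a vec) $ r = 0" by simp
  qed
  have B: "Suc s < d \<longrightarrow> (gch d (Suc s) :: 'a vec) $ (d - 1 - Suc s) = 1"
  proof
    assume s: "Suc s < d"
    have "Dop d ?v $ (d - 1 - s - 1) = ?v $ (d - 1 - s)" using D_top[OF v z] s by simp
    moreover have "d - 1 - s - 1 = d - 1 - Suc s" by simp
    ultimately show "(gch d (Suc s) :: 'a vec) $ (d - 1 - Suc s) = 1" using IH3 s by simp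
  qed
  show ?case using A B Dop_carrier[OF v] by simp
qed

definition isX :: "nat \<Rightarrow> 'a::field vec \<Rightarrow> bool" where
  "isX d v \<longleftrightarrow> (\<forall>t. 2*t < d \<longrightarrow> v $ (2*t) = 0)"
definition isY :: "nat \<Rightarrow> 'a::field vec \<Rightarrow> bool" where
  "isY d v \<longleftrightarrow> (\<forall>t. 2*t+1 < d \<longrightarrow> v $ (2*t) = v $ (2*t+1))"

lemma uXY:
  fixes v :: "'a::field vec"
  assumes v: "v \<in> carrier_vec (2*m)" and X: "isX (2*m) v"
  shows "isY (2*m) (Vu (2*m) *\<^sub>v v)"
  unfolding isY_def
proof (intro allI impI)
  fix t assume t: "2*t+1 < 2*m"
  have "(\<Sum>c<2*m. (Vu (2*m) :: 'a mat) $$ (2*t,c) * v $ c) = (\<Sum>c<2*m. (Vu (2*m) :: 'a mat) $$ (2*t+1,c) * v $ c)"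
  proof (rule sum.cong[OF refl])
    fix c assume c: "c \<in> {..<2*m}"
    show "(Vu (2*m) :: 'a mat) $$ (2*t,c) * v $ c = (Vu (2*m) :: 'a mat) $$ (2*t+1,c) * v $ c"
    proof (cases "even c")
      case True
      then obtain q where q: "c = 2*q" by blast
      then have "v $ c = 0" using X c unfolding isX_def by auto
      then show ?thesis by simp
    next
      case False
      then obtain q where q: "c = 2*q+1" using oddE by blast
      have "(Vu (2*m) :: 'a mat) $$ (2*t,c) = (Vu (2*m) :: 'a mat) $$ (2*t+1,c)"
        using t c q by (simp add: Vu_index)
      then show ?thesis by simp
    qed
  qed
  then show "(Vu (2*m) *\<^sub>v v) $ (2*t) = (Vu (2*m) *\<^sub>v v) $ (2*t+1)"
    using mv_index[OF Vu_carrier v] t by simp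
qed

lemma uYX:
  assumes m: "odd m" and two: "(2::'a::field) = 0"
    and v: "(v::'a vec) \<in> carrier_vec (2*m)" and Y: "isY (2*m) v"
  shows "isX (2*m) (Vu (2*m) *\<^sub>v v)"
  unfolding isX_def
proof (intro allI impI)
  fix t assume t: "2*t < 2*m"
  have "(\<Sum>c<2*m. (Vu (2*m) :: 'a mat) $$ (2*t,c) * v $ c) = (\<Sum>s<m. (Vu (2*m) :: 'a mat) $$ (2*t,2*s) * v $ (2*s) + (Vu (2*m) :: 'a mat) $$ (2*t,2*s+1) * v $ (2*s+1))"
    by (rule sum_pairs)
  also have "\<dots> = (\<Sum>s<m. 0)"
  proof (rule sum.cong[OF refl])
    fix s assume s: "s \<in> {..<m}"
    have e1: "(Vu (2*m) :: 'a mat) $$ (2*t,2*s) = (Vu (2*m) :: 'a mat) $$ (2*t,2*s+1)"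
    proof -
      have o: "(2*s \<le> m) = (2*s+1 \<le> m)" using m by presburger
      have p: "2*t+1 \<noteq> 2*s" "2*t \<noteq> 2*s+1" by presburger+
      have q: "(2*t \<le> 2*s) = (2*t \<le> 2*s+1)" by presburger
      have mm: "1 \<le> m" using m by (cases m) auto
      show ?thesis using t s o p q mm by (auto simp: Vu_index)
    qed
    have e2: "v $ (2*s) = v $ (2*s+1)" using Y s unfolding isY_def by auto
    show "(Vu (2*m) :: 'a mat) $$ (2*t,2*s) * v $ (2*s) + (Vu (2*m) :: 'a mat) $$ (2*t,2*s+1) * v $ (2*s+1) = 0"
      unfolding e1 e2 by (rule two_zero[OF two])
  qed
  finally show "(Vu (2*m) *\<^sub>v v) $ (2*t) = 0"
    using mv_index[OF Vu_carrier v] t by simp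
qed

lemma VuVu:
  assumes two: "(2::'a::field) = 0" and v: "(v::'a vec) \<in> carrier_vec d" and i: "i < d"
  shows "(Vu d *\<^sub>v (Vu d *\<^sub>v v)) $ i = Dop d (Dop d v) $ i + v $ i"
proof -
  have Vv: "Vu d *\<^sub>v v \<in> carrier_vec d" using mult_mat_vec_carrier[OF Vu_carrier v] .
  have "Dop d (Dop d v) $ i = (Vu d *\<^sub>v (Vu d *\<^sub>v v - v)) $ i - (Vu d *\<^sub>v v - v) $ i"
    unfolding Dop_def using Vu_carrier[of d] v i by simp
  also have "\<dots> = (Vu d *\<^sub>v (Vu d *\<^sub>v v)) $ i - (Vu d *\<^sub>v v) $ i - ((Vu d *\<^sub>v v) $ i - v $ i)"
    using mult_minus_distrib_mat_vec[OF Vu_carrier Vv v] Vv v i Vu_carrier[of d] by simp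
  finally have e: "Dop d (Dop d v) $ i = (Vu d *\<^sub>v (Vu d *\<^sub>v v)) $ i - (Vu d *\<^sub>v v) $ i - ((Vu d *\<^sub>v v) $ i - v $ i)" .
  have z: "\<And>x::'a. x + x = 0" using two_zero[OF two] .
  have alg: "\<And>a b c::'a. a - b - (b - c) + c = a - (b + b) + (c + c)" by (simp add: algebra_simps)
  show ?thesis unfolding e alg z by simp
qed

lemma DDX:
  assumes m: "odd m" and two: "(2::'a::field) = 0"
    and v: "(v::'a vec) \<in> carrier_vec (2*m)" and X: "isX (2*m) v"
  shows "isX (2*m) (Dop (2*m) (Dop (2*m) v))"
  unfolding isX_def
proof (intro allI impI)
  fix t assume t: "2*t < 2*m"
  have "isX (2*m) (Vu (2*m) *\<^sub>v (Vu (2*m) *\<^sub>v v))"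
    using uYX[OF m two mult_mat_vec_carrier[OF Vu_carrier v] uXY[OF v X]] .
  then have "(Vu (2*m) *\<^sub>v (Vu (2*m) *\<^sub>v v)) $ (2*t) = 0" using t unfolding isX_def by auto
  moreover have "v $ (2*t) = 0" using X t unfolding isX_def by auto
  ultimately show "Dop (2*m) (Dop (2*m) v) $ (2*t) = 0" using VuVu[OF two v t] by simp
qed

lemma gch_X:
  assumes m: "odd m" and two: "(2::'a::field) = 0"
  shows "isX (2*m) (gch (2*m) (2*s) :: 'a vec)"
proof (induction s)
  case 0
  have "\<And>t. 2*t < 2*m \<Longrightarrow> 2*t \<noteq> 2*m - 1" by presburger
  then show ?case unfolding isX_def by auto
next
  case (Suc s)
  have d: "0 < 2*m" using m by (cases m) auto
  have c: "(gch (2*m) (2*s) :: 'a vec) \<in> carrier_vec (2*m)" using gch_props[OF d] by blast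
  have "gch (2*m) (2*Suc s) = (Dop (2*m) (Dop (2*m) (gch (2*m) (2*s))) :: 'a vec)" by simp
  then show ?case using DDX[OF m two c Suc] by simp
qed

lemma sp_index: "w \<in> carrier_vec n \<Longrightarrow> v \<bullet> w = (\<Sum>r<n. v $ r * w $ r)"
  by (simp add: scalar_prod_def atLeast0LessThan)

lemma Vform_carrier: "Vform d \<in> carrier_mat d d" unfolding Vform_def by auto

lemma Vform_mv:
  assumes w: "w \<in> carrier_vec d" and r: "r < d"
  shows "(Vform d *\<^sub>v w) $ r = w $ (d - 1 - r)"
proof -
  have "(Vform d *\<^sub>v w) $ r = (\<Sum>c<d. (if c = d - 1 - r then w $ c else 0))"
    unfolding mv_index[OF Vform_carrier w r]
    by (rule sum.cong[OF refl]) (use r in \<open>auto simp: Vform_def\<close>)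
  also have "\<dots> = w $ (d - 1 - r)" using r by (simp add: sum.delta')
  finally show ?thesis .
qed

lemma Vform_dims[simp]: "dim_row (Vform d) = d" "dim_col (Vform d) = d" using Vform_carrier[of d] by auto

lemma isoX:
  assumes v: "v \<in> carrier_vec (2*m)" and w: "w \<in> carrier_vec (2*m)"
    and X: "isX (2*m) v" "isX (2*m) w"
  shows "v \<bullet> (Vform (2*m) *\<^sub>v w) = 0"
proof -
  have "v \<bullet> (Vform (2*m) *\<^sub>v w) = (\<Sum>r<2*m. v $ r * (Vform (2*m) *\<^sub>v w) $ r)"
    by (rule sp_index[OF mult_mat_vec_carrier[OF Vform_carrier w]])
  also have "\<dots> = (\<Sum>r<2*m. 0)"
  proof (rule sum.cong[OF refl])
    fix r assume r: "r \<in> {..<2*m}"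
    show "v $ r * (Vform (2*m) *\<^sub>v w) $ r = 0"
    proof (cases "even r")
      case True
      then obtain q where "r = 2*q" by blast
      then have "v $ r = 0" using X(1) r unfolding isX_def by auto
      then show ?thesis by simp
    next
      case False
      have "even (2*m - 1 - r)" using False r by presburger
      then obtain q where q: "2*m - 1 - r = 2*q" by blast
      have "2*q < 2*m" using q r by auto
      then have "w $ (2*m - 1 - r) = 0" using X(2) q unfolding isX_def by auto
      then show ?thesis using Vform_mv[OF w] r by simp
    qed
  qed
  finally show ?thesis by simp
qed

lemma isoY:
  assumes two: "(2::'a::field) = 0"
    and v: "(v::'a vec) \<in> carrier_vec (2*m)" and w: "w \<in> carrier_vec (2*m)"
    and Y: "isY (2*m) v" "isY (2*m) w"
  shows "v \<bullet> (Vform (2*m) *\<^sub>v w) = 0"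
proof -
  have "v \<bullet> (Vform (2*m) *\<^sub>v w) = (\<Sum>r<2*m. v $ r * (Vform (2*m) *\<^sub>v w) $ r)"
    by (rule sp_index[OF mult_mat_vec_carrier[OF Vform_carrier w]])
  also have "\<dots> = (\<Sum>s<m. v $ (2*s) * (Vform (2*m) *\<^sub>v w) $ (2*s) + v $ (2*s+1) * (Vform (2*m) *\<^sub>v w) $ (2*s+1))"
    by (rule sum_pairs)
  also have "\<dots> = (\<Sum>s<m. 0)"
  proof (rule sum.cong[OF refl])
    fix s assume s: "s \<in> {..<m}"
    have a: "2*m - 1 - 2*s = 2*(m-1-s) + 1" "2*m - 1 - (2*s+1) = 2*(m-1-s)" using s by auto
    have b: "w $ (2*(m-1-s)) = w $ (2*(m-1-s)+1)" using Y(2) s unfolding isY_def by auto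
    have c: "v $ (2*s) = v $ (2*s+1)" using Y(1) s unfolding isY_def by auto
    have "v $ (2*s) * (Vform (2*m) *\<^sub>v w) $ (2*s) + v $ (2*s+1) * (Vform (2*m) *\<^sub>v w) $ (2*s+1)
      = v $ (2*s+1) * w $ (2*(m-1-s)+1) + v $ (2*s+1) * w $ (2*(m-1-s)+1)"
      using Vform_mv[OF w, of "2*s"] Vform_mv[OF w, of "2*s+1"] s a b c by simp
    also have "\<dots> = 0" by (rule two_zero[OF two])
    finally show "v $ (2*s) * (Vform (2*m) *\<^sub>v w) $ (2*s) + v $ (2*s+1) * (Vform (2*m) *\<^sub>v w) $ (2*s+1) = 0" .
  qed
  finally show ?thesis by simp
qed

definition xv :: "nat \<Rightarrow> nat \<Rightarrow> 'a::field vec" where "xv m c = gch (2*m) (2*(m-1-c))"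

definition Pm :: "nat \<Rightarrow> 'a::field mat" where
  "Pm m = mat (2*m) (2*m) (\<lambda>(r,c). if c < m then (xv m c :: 'a vec) $ r else (Vu (2*m) *\<^sub>v xv m (c-m)) $ r)"

lemma xv_carrier: "0 < m \<Longrightarrow> (xv m c :: 'a::field vec) \<in> carrier_vec (2*m)"
  unfolding xv_def using gch_props[of "2*m"] by auto

lemma Pm_carrier: "Pm m \<in> carrier_mat (2*m) (2*m)" unfolding Pm_def by auto
lemma Pm_dims[simp]: "dim_row (Pm m) = 2*m" "dim_col (Pm m) = 2*m" unfolding Pm_def by auto

lemma Pm_index: "r < 2*m \<Longrightarrow> c < 2*m \<Longrightarrow> (Pm m :: 'a::field mat) $$ (r,c) =
   (if c < m then (xv m c :: 'a vec) $ r else (Vu (2*m) *\<^sub>v xv m (c-m)) $ r)"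
  unfolding Pm_def by simp

lemma col_Pm: assumes m: "0 < m" and c: "c < 2*m"
  shows "col (Pm m :: 'a::field mat) c = (if c < m then xv m c else Vu (2*m) *\<^sub>v xv m (c-m))"
proof -
  have d1: "dim_vec (xv m c' :: 'a vec) = 2*m" for c' using carrier_vecD[OF xv_carrier[OF m]] .
  show ?thesis
  proof (rule eq_vecI)
    fix i assume "i < dim_vec (if c < m then xv m c else Vu (2*m) *\<^sub>v xv m (c-m) :: 'a vec)"
    then have i: "i < 2*m" using d1 by (auto split: if_splits)
    show "col (Pm m :: 'a::field mat) c $ i = (if c < m then xv m c else Vu (2*m) *\<^sub>v xv m (c-m)) $ i"
      using i c by (simp add: Pm_index)
  qed (use d1 c in auto)
qed

lemma Jblock_carrier: "Jblock m \<in> carrier_mat m m" unfolding Jblock_def by auto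
lemma Jblock_index: "a < m \<Longrightarrow> b < m \<Longrightarrow> Jblock m $$ (a,b) = (if a = b \<or> a + 1 = b then 1 else 0)"
  unfolding Jblock_def by auto

lemma Ind2_carrier: "A \<in> carrier_mat n n \<Longrightarrow> Ind2 A \<in> carrier_mat (2*n) (2*n)"
  unfolding Ind2_def by (auto simp: mult_2)

lemma Ind2_index: assumes A: "A \<in> carrier_mat n n" and t: "t < 2*n" and j: "j < 2*n"
  shows "Ind2 A $$ (t,j) = (if t < n then (if j < n then 0 else A $$ (t, j-n)) else (if j < n then (if t - n = j then 1 else 0) else 0))"
  using A t j unfolding Ind2_def by (auto simp: mult_2)

lemma Pm_rel:
  assumes m: "odd m" and two: "(2::'a::field) = 0"
  shows "(Vu (2*m) :: 'a mat) * Pm m = Pm m * Ind2 (Jblock m)"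
proof (rule eq_matI)
  have m0: "0 < m" using m by (cases m) auto
  have I: "Ind2 (Jblock m :: 'a mat) \<in> carrier_mat (2*m) (2*m)" by (rule Ind2_carrier[OF Jblock_carrier])
  fix i j assume i: "i < dim_row (Pm m * Ind2 (Jblock m) :: 'a mat)" and j: "j < dim_col (Pm m * Ind2 (Jblock m) :: 'a mat)"
  hence i: "i < 2*m" and j: "j < 2*m" using I by auto
  have L: "((Vu (2*m) :: 'a mat) * Pm m) $$ (i,j) = (Vu (2*m) *\<^sub>v col (Pm m) j) $ i"
    using i j by simp
  have R: "(Pm m * Ind2 (Jblock m) :: 'a mat) $$ (i,j) = (\<Sum>t<2*m. Pm m $$ (i,t) * Ind2 (Jblock m) $$ (t,j))"
    by (rule mm_index[OF Pm_carrier I i j])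
  show "((Vu (2*m) :: 'a mat) * Pm m) $$ (i,j) = (Pm m * Ind2 (Jblock m) :: 'a mat) $$ (i,j)"
  proof (cases "j < m")
    case True
    have "(\<Sum>t<2*m. (Pm m :: 'a mat) $$ (i,t) * Ind2 (Jblock m) $$ (t,j)) = (\<Sum>t<2*m. if t = m + j then Pm m $$ (i,m+j) else 0)"
      by (rule sum.cong[OF refl]) (use True j in \<open>auto simp: Ind2_index[OF Jblock_carrier]\<close>)
    also have "\<dots> = (Pm m :: 'a mat) $$ (i,m+j)" using True by (simp add: sum.delta')
    also have "\<dots> = (Vu (2*m) *\<^sub>v xv m j) $ i" using True i by (simp add: Pm_index)
    finally show ?thesis unfolding L R using col_Pm[OF m0 j, where 'a='a] True by simp
  next
    case False
    define j' where "j' = j - m"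
    have j': "j' < m" "j = m + j'" using j False unfolding j'_def by auto
    have "(\<Sum>t<2*m. (Pm m :: 'a mat) $$ (i,t) * Ind2 (Jblock m) $$ (t,j)) =
       (\<Sum>t<2*m. (if t = j' then Pm m $$ (i,j') else 0) + (if 0 < j' \<and> t = j' - 1 then Pm m $$ (i,j'-1) else 0))"
    proof (rule sum.cong[OF refl])
      fix t assume t: "t \<in> {..<2*m}"
      show "(Pm m :: 'a mat) $$ (i,t) * Ind2 (Jblock m) $$ (t,j) = (if t = j' then Pm m $$ (i,j') else 0) + (if 0 < j' \<and> t = j' - 1 then Pm m $$ (i,j'-1) else 0)"
        using t j' j by (auto simp: Ind2_index[OF Jblock_carrier] Jblock_index)
    qed
    also have "\<dots> = Pm m $$ (i,j') + (if 0 < j' then Pm m $$ (i,j'-1) else 0)"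
      using j' by (simp add: sum.distrib sum.delta')
    also have "\<dots> = (xv m j' :: 'a vec) $ i + (if 0 < j' then (xv m (j'-1) :: 'a vec) $ i else 0)"
      using j' i by (auto simp: Pm_index)
    finally have R': "(Pm m * Ind2 (Jblock m) :: 'a mat) $$ (i,j) = (xv m j' :: 'a vec) $ i + (if 0 < j' then (xv m (j'-1) :: 'a vec) $ i else 0)"
      unfolding R .
    have col: "col (Pm m :: 'a mat) j = Vu (2*m) *\<^sub>v xv m j'" using col_Pm[OF m0 j, where 'a='a] j' by simp
    have DD: "Dop (2*m) (Dop (2*m) (xv m j')) = (gch (2*m) (2*(m-1-j') + 2) :: 'a vec)"
      unfolding xv_def by (simp add: numeral_2_eq_2)
    have DDi: "Dop (2*m) (Dop (2*m) (xv m j')) $ i = (if 0 < j' then (xv m (j'-1) :: 'a vec) $ i else 0)"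
    proof (cases "0 < j'")
      case True
      have "2*(m-1-j') + 2 = 2*(m-1-(j'-1))" using True j' by auto
      then show ?thesis using DD True unfolding xv_def by simp
    next
      case False
      then have "2*(m-1-j') + 2 = 2*m" using j' m0 by auto
      then have "Dop (2*m) (Dop (2*m) (xv m j')) = (gch (2*m) (2*m) :: 'a vec)" using DD by simp
      moreover have "(gch (2*m) (2*m) :: 'a vec) $ i = 0" using gch_props[of "2*m" "2*m"] m0 i by auto
      ultimately show ?thesis using False by simp
    qed
    have "((Vu (2*m) :: 'a mat) * Pm m) $$ (i,j) = Dop (2*m) (Dop (2*m) (xv m j')) $ i + (xv m j' :: 'a vec) $ i"
      unfolding L col by (rule VuVu[OF two xv_carrier[OF m0] i])
    then show ?thesis unfolding R' DDi by (simp add: add.commute)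
  qed
qed (auto simp: Ind2_carrier[OF Jblock_carrier] mult_2 Ind2_def Jblock_def)

definition Ppm :: "nat \<Rightarrow> 'a::field mat" where
  "Ppm m = mat (2*m) (2*m) (\<lambda>(r,j). (gch (2*m) (2*m-1-j) :: 'a vec) $ r)"

lemma prod_list_ones: "(\<forall>x\<in>set xs. x = 1) \<Longrightarrow> prod_list xs = (1::'a::monoid_mult)"
  by (induction xs) auto

lemma Ppm_inj:
  assumes m: "0 < m" and w: "w \<in> carrier_vec (2*m)" and z: "(Ppm m :: 'a::field mat) *\<^sub>v w = 0\<^sub>v (2*m)"
  shows "w = 0\<^sub>v (2*m)"
proof -
  have d: "0 < 2*m" using m by auto
  have C: "(Ppm m :: 'a mat) \<in> carrier_mat (2*m) (2*m)" unfolding Ppm_def by auto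
  have ut: "upper_triangular (Ppm m :: 'a mat)"
    unfolding upper_triangular_def
  proof (intro allI impI)
    fix i j assume i: "i < dim_row (Ppm m :: 'a mat)" and j: "j < i"
    then have i': "i < 2*m" unfolding Ppm_def by auto
    then have "2*m \<le> i + (2*m-1-j)" using j by auto
    then show "(Ppm m :: 'a mat) $$ (i,j) = 0" using gch_props[OF d, of "2*m-1-j", where 'a='a] i' j
      unfolding Ppm_def by auto
  qed
  have "\<forall>x\<in>set (diag_mat (Ppm m :: 'a mat)). x = 1"
  proof
    fix x assume "x \<in> set (diag_mat (Ppm m :: 'a mat))"
    then obtain i where i: "i < 2*m" and x: "x = (Ppm m :: 'a mat) $$ (i,i)"
      unfolding diag_mat_def Ppm_def by auto
    have e: "2*m - 1 - (2*m-1-i) = i" using i by auto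
    have "(gch (2*m) (2*m-1-i) :: 'a vec) $ (2*m - 1 - (2*m-1-i)) = 1"
      using gch_props[OF d, of "2*m-1-i", where 'a='a] i by auto
    then show "x = 1" unfolding x Ppm_def using i e by simp
  qed
  then have "det (Ppm m :: 'a mat) = 1" using det_upper_triangular[OF ut C] prod_list_ones by metis
  then have "det (Ppm m :: 'a mat) \<noteq> 0" by simp
  then show ?thesis using det_0_iff_vec_prod_zero_field[OF C] w z by blast
qed

lemma sum_split2: "(\<Sum>c<2*m. f c) = (\<Sum>c<m. f c) + (\<Sum>c<(m::nat). f (m+c))"
  using sum_prod_idx[of f 2 m] by (simp add: numeral_2_eq_2 sum.distrib)

lemma Pm_inj:
  assumes m: "0 < m" and v: "v \<in> carrier_vec (2*m)" and z: "(Pm m :: 'a::field mat) *\<^sub>v v = 0\<^sub>v (2*m)"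
  shows "v = 0\<^sub>v (2*m)"
proof -
  define wv where "wv = vec (2*m) (\<lambda>t. if even t then v $ (m + t div 2) else v $ (t div 2) + v $ (m + t div 2))"
  have wv: "wv \<in> carrier_vec (2*m)" unfolding wv_def by auto
  have PC: "(Ppm m :: 'a mat) \<in> carrier_mat (2*m) (2*m)" unfolding Ppm_def by auto
  have x: "xv m s = (gch (2*m) (2*m-1-(2*s+1)) :: 'a vec)" if s: "s < m" for s
  proof -
    have "2*m-1-(2*s+1) = 2*(m-1-s)" using s by auto
    then show ?thesis unfolding xv_def by simp
  qed
  have dx: "Dop (2*m) (xv m s) = (gch (2*m) (2*m-1-2*s) :: 'a vec)" if s: "s < m" for s
  proof -
    have "2*m-1-2*s = Suc (2*(m-1-s))" using s by auto
    then show ?thesis unfolding xv_def by simp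
  qed
  have eq: "(Pm m :: 'a mat) *\<^sub>v v = Ppm m *\<^sub>v wv"
  proof (rule eq_vecI)
    fix r assume r: "r < dim_vec (Ppm m *\<^sub>v wv :: 'a vec)"
    then have r: "r < 2*m" using PC by auto
    have "((Pm m :: 'a mat) *\<^sub>v v) $ r = (\<Sum>c<m. Pm m $$ (r,c) * v $ c) + (\<Sum>c<m. Pm m $$ (r,m+c) * v $ (m+c))"
      unfolding mv_index[OF Pm_carrier v r] by (rule sum_split2)
    also have "\<dots> = (\<Sum>s<m. (xv m s :: 'a vec) $ r * v $ s + (Vu (2*m) *\<^sub>v xv m s) $ r * v $ (m+s))"
      using r by (simp add: Pm_index sum.distrib)
    also have "\<dots> = (\<Sum>s<m. (Ppm m :: 'a mat) $$ (r,2*s) * wv $ (2*s) + Ppm m $$ (r,2*s+1) * wv $ (2*s+1))"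
    proof (rule sum.cong[OF refl])
      fix s assume s: "s \<in> {..<m}"
      have "(Vu (2*m) *\<^sub>v xv m s) $ r = Dop (2*m) (xv m s) $ r + (xv m s :: 'a vec) $ r"
        using Dop_index[OF xv_carrier[OF m] r, of s, where 'a='a] by simp
      moreover have "wv $ (2*s) = v $ (m+s)" "wv $ (2*s+1) = v $ s + v $ (m+s)"
        using s unfolding wv_def by auto
      moreover have "(Ppm m :: 'a mat) $$ (r,2*s) = Dop (2*m) (xv m s) $ r"
        "(Ppm m :: 'a mat) $$ (r,2*s+1) = (xv m s :: 'a vec) $ r"
        using s r dx x unfolding Ppm_def by auto
      ultimately show "(xv m s :: 'a vec) $ r * v $ s + (Vu (2*m) *\<^sub>v xv m s) $ r * v $ (m+s) =
         (Ppm m :: 'a mat) $$ (r,2*s) * wv $ (2*s) + Ppm m $$ (r,2*s+1) * wv $ (2*s+1)"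
        by (simp add: algebra_simps)
    qed
    also have "\<dots> = ((Ppm m :: 'a mat) *\<^sub>v wv) $ r"
      unfolding mv_index[OF PC wv r] by (rule sum_pairs[symmetric])
    finally show "((Pm m :: 'a mat) *\<^sub>v v) $ r = ((Ppm m :: 'a mat) *\<^sub>v wv) $ r" .
  qed (use PC in auto)
  have "wv = 0\<^sub>v (2*m)" using Ppm_inj[OF m wv] z eq by simp
  then have w0: "wv $ t = 0" if "t < 2*m" for t using that by simp
  show ?thesis
  proof (rule eq_vecI)
    fix i assume i: "i < dim_vec (0\<^sub>v (2*m) :: 'a vec)"
    then have i: "i < 2*m" by simp
    show "v $ i = 0\<^sub>v (2*m) $ i"
    proof (cases "i < m")
      case True
      have a: "wv $ (2*i) = 0" "wv $ (2*i+1) = 0" using w0 True by auto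
      then show ?thesis using True unfolding wv_def by auto
    next
      case False
      have a: "wv $ (2*(i-m)) = 0" using w0 False i by auto
      then show ?thesis using False i unfolding wv_def by auto
    qed
  qed (use v in auto)
qed

lemma single:
  fixes m :: nat
  assumes m: "odd m" and two: "(2::'a::field) = 0"
  shows "\<exists>P Pi. P \<in> carrier_mat (2*m) (2*m) \<and> Pi \<in> carrier_mat (2*m) (2*m) \<and> P * Pi = 1\<^sub>m (2*m) \<and> Pi * P = 1\<^sub>m (2*m)
    \<and> (Vu (2*m) :: 'a mat) * P = P * Ind2 (Jblock m)
    \<and> (\<forall>a<2*m. \<forall>b<2*m. (a < m \<longleftrightarrow> b < m) \<longrightarrow> (transpose_mat P * (Vform (2*m) * P)) $$ (a,b) = 0)"
proof -
  have m0: "0 < m" using m by (cases m) auto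
  obtain Pi where Pi: "Pi \<in> carrier_mat (2*m) (2*m)" "(Pm m :: 'a mat) * Pi = 1\<^sub>m (2*m)" "Pi * Pm m = 1\<^sub>m (2*m)"
    using sq_inv[OF Pm_carrier Pm_inj[OF m0], where 'a='a] by blast
  have iso: "(transpose_mat (Pm m) * (Vform (2*m) * Pm m) :: 'a mat) $$ (a,b) = 0"
    if a: "a < 2*m" and b: "b < 2*m" and ab: "a < m \<longleftrightarrow> b < m" for a b
  proof -
    have "(transpose_mat (Pm m) * (Vform (2*m) * Pm m) :: 'a mat) $$ (a,b) = col (Pm m) a \<bullet> (Vform (2*m) *\<^sub>v col (Pm m) b)"
    proof -
      have cm: "col (Vform (2*m) * Pm m :: 'a mat) b = Vform (2*m) *\<^sub>v col (Pm m) b"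
        by (rule col_mult2[OF Vform_carrier Pm_carrier b])
      show ?thesis using a b cm by simp
    qed
    also have "\<dots> = 0"
    proof (cases "a < m")
      case True
      then have bm: "b < m" using ab by simp
      have X: "isX (2*m) (xv m c :: 'a vec)" for c unfolding xv_def by (rule gch_X[OF m two])
      show ?thesis unfolding col_Pm[OF m0 a, where 'a='a] col_Pm[OF m0 b, where 'a='a] using True bm
        by (simp add: isoX[OF xv_carrier[OF m0] xv_carrier[OF m0] X X])
    next
      case False
      then have bm: "\<not> b < m" using ab by simp
      have Y: "isY (2*m) (Vu (2*m) *\<^sub>v xv m c :: 'a vec)" for c
        by (rule uXY[OF xv_carrier[OF m0]]) (unfold xv_def, rule gch_X[OF m two])
      have C: "(Vu (2*m) *\<^sub>v xv m c :: 'a vec) \<in> carrier_vec (2*m)" for c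
        by (rule mult_mat_vec_carrier[OF Vu_carrier xv_carrier[OF m0]])
      show ?thesis unfolding col_Pm[OF m0 a, where 'a='a] col_Pm[OF m0 b, where 'a='a] using False bm
        by (simp add: isoY[OF two C C Y Y])
    qed
    finally show ?thesis .
  qed
  show ?thesis
    by (rule exI[of _ "Pm m"], rule exI[of _ Pi]) (use Pi Pm_carrier Pm_rel[OF m two] iso in auto)
qed

lemma dm: "(y::nat) < b \<Longrightarrow> (x*b + y) div b = x \<and> (x*b + y) mod b = y"
  by simp

definition sg :: "nat \<Rightarrow> nat \<Rightarrow> nat \<Rightarrow> nat" where
  "sg l k j = (if j < l*k then (j div k)*(2*k) + j mod k else (l + (j - l*k) div k)*(2*k) + (k + (j - l*k) mod k))"
definition inS :: "nat \<Rightarrow> nat \<Rightarrow> nat \<Rightarrow> bool" where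
  "inS l k i \<longleftrightarrow> (i div (2*k) < l \<longleftrightarrow> i mod (2*k) < k)"
definition tau :: "nat \<Rightarrow> nat \<Rightarrow> nat \<Rightarrow> nat" where
  "tau l k i = (if i div (2*k) < l then (i div (2*k))*k + i mod (2*k) else l*k + ((i div (2*k) - l)*k + (i mod (2*k) - k)))"

lemma lt_mult_bound: "(a::nat) < l \<Longrightarrow> b < k \<Longrightarrow> a*k + b < l*k"
proof -
  assume "a < l" "b < k"
  then have "a*k + b < a*k + k" by simp
  also have "\<dots> = (a+1)*k" by simp
  also have "\<dots> \<le> l*k" using \<open>a < l\<close> by (intro mult_right_mono) auto
  finally show ?thesis .
qed

lemma sg_lo:
  assumes k: "0 < k" and j: "j < l*k"
  shows "sg l k j div (2*k) = j div k" "sg l k j mod (2*k) = j mod k"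
proof -
  have "j mod k < k" using k by simp
  then have "j mod k < 2*k" by linarith
  then show "sg l k j div (2*k) = j div k" "sg l k j mod (2*k) = j mod k"
    using dm[of "j mod k" "2*k" "j div k"] j unfolding sg_def by auto
qed

lemma sg_hi:
  assumes k: "0 < k" and j: "\<not> j < l*k"
  shows "sg l k j div (2*k) = l + (j - l*k) div k" "sg l k j mod (2*k) = k + (j - l*k) mod k"
proof -
  have "k + (j - l*k) mod k < 2*k" using k by simp
  then show "sg l k j div (2*k) = l + (j - l*k) div k" "sg l k j mod (2*k) = k + (j - l*k) mod k"
    using dm[of "k + (j - l*k) mod k" "2*k" "l + (j - l*k) div k"] j unfolding sg_def by auto
qed

lemma divmod_eq: "(0::nat) < b \<Longrightarrow> i = (i div b) * b + i mod b" by simp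

lemma sg_props:
  assumes k: "0 < k" and j: "j < 2*(l*k)"
  shows "sg l k j < 2*l*(2*k) \<and> inS l k (sg l k j) \<and> tau l k (sg l k j) = j"
proof (cases "j < l*k")
  case True
  have jd: "j div k < l" using True k by (simp add: less_mult_imp_div_less)
  have jm: "j mod k < k" using k by simp
  have b: "sg l k j < 2*l*(2*k)"
  proof -
    have "sg l k j = (j div k)*(2*k) + j mod k" using True unfolding sg_def by simp
    also have "\<dots> < (2*l)*(2*k)" using jd jm lt_mult_bound[of "j div k" "2*l" "j mod k" "2*k"] by auto
    finally show ?thesis by simp
  qed
  have "tau l k (sg l k j) = (j div k)*k + j mod k" unfolding tau_def sg_lo[OF k True] using jd by simp
  then show ?thesis using b jd jm k unfolding inS_def sg_lo[OF k True] by simp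
next
  case False
  have j1: "j - l*k < l*k" using j False by auto
  have jd: "(j - l*k) div k < l" using j1 k by (simp add: less_mult_imp_div_less)
  have jm: "(j - l*k) mod k < k" using k by simp
  have b: "sg l k j < 2*l*(2*k)"
  proof -
    have "sg l k j = (l + (j - l*k) div k)*(2*k) + (k + (j - l*k) mod k)" using False unfolding sg_def by simp
    also have "\<dots> < (2*l)*(2*k)" using jd jm lt_mult_bound[of "l + (j - l*k) div k" "2*l" "k + (j - l*k) mod k" "2*k"] by auto
    finally show ?thesis by simp
  qed
  have "tau l k (sg l k j) = l*k + (((j - l*k) div k)*k + (j - l*k) mod k)" unfolding tau_def sg_hi[OF k False] using jd by simp
  also have "\<dots> = j" using False by simp
  finally show ?thesis using b jd jm k unfolding inS_def sg_hi[OF k False] by simp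
qed

lemma tau_props:
  assumes k: "0 < k" and i: "i < 2*l*(2*k)" and S: "inS l k i"
  shows "tau l k i < 2*(l*k) \<and> sg l k (tau l k i) = i"
proof (cases "i div (2*k) < l")
  case True
  then have b: "i mod (2*k) < k" using S unfolding inS_def by simp
  have t: "tau l k i = (i div (2*k))*k + i mod (2*k)" using True unfolding tau_def by simp
  have tl: "tau l k i < l*k" unfolding t using lt_mult_bound[OF True b] .
  have "tau l k i div k = i div (2*k)" "tau l k i mod k = i mod (2*k)" unfolding t using dm[OF b] by auto
  then have "sg l k (tau l k i) = (i div (2*k))*(2*k) + i mod (2*k)" using tl unfolding sg_def by simp
  also have "\<dots> = i" by (rule div_mult_mod_eq)
  finally show ?thesis using tl by simp
next
  case False
  then have b: "\<not> i mod (2*k) < k" using S unfolding inS_def by simp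
  have b2: "i mod (2*k) - k < k" using k by (simp add: less_diff_conv2 b not_less[symmetric] mult_2[symmetric] del: mult_2)
  have a2: "i div (2*k) < 2*l" using i k by (simp add: less_mult_imp_div_less mult.assoc)
  have a3: "i div (2*k) - l < l" using a2 False by auto
  have t: "tau l k i = l*k + ((i div (2*k) - l)*k + (i mod (2*k) - k))" using False unfolding tau_def by simp
  have tl: "(i div (2*k) - l)*k + (i mod (2*k) - k) < l*k" using lt_mult_bound[OF a3 b2] .
  have nt: "\<not> tau l k i < l*k" unfolding t by simp
  have e: "tau l k i - l*k = (i div (2*k) - l)*k + (i mod (2*k) - k)" unfolding t by simp
  have "sg l k (tau l k i) = (l + (i div (2*k) - l))*(2*k) + (k + (i mod (2*k) - k))"
    using nt dm[OF b2, of "i div (2*k) - l"] unfolding sg_def e by simp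
  also have "\<dots> = (i div (2*k))*(2*k) + i mod (2*k)" using False b by simp
  also have "\<dots> = i" by (rule div_mult_mod_eq)
  finally show ?thesis using tl unfolding t by (simp add: mult.commute)
qed

definition Em :: "nat \<Rightarrow> nat \<Rightarrow> 'a::field mat" where
  "Em l k = mat (2*l*(2*k)) (2*(l*k)) (\<lambda>(i,j). if i = sg l k j then 1 else 0)"

lemma Em_carrier: "Em l k \<in> carrier_mat (2*l*(2*k)) (2*(l*k))" unfolding Em_def by auto
lemma Em_dims[simp]: "dim_row (Em l k) = 2*l*(2*k)" "dim_col (Em l k) = 2*(l*k)" unfolding Em_def by auto

lemma sg_iff:
  assumes k: "0 < k" and i: "i < 2*l*(2*k)" and t: "t < 2*(l*k)"
  shows "(i = sg l k t) \<longleftrightarrow> (inS l k i \<and> t = tau l k i)"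
  using sg_props[OF k t] tau_props[OF k i] by auto

lemma Em_mv:
  assumes k: "0 < k" and a: "a \<in> carrier_vec (2*(l*k))" and i: "i < 2*l*(2*k)"
  shows "((Em l k :: 'a::field mat) *\<^sub>v a) $ i = (if inS l k i then a $ tau l k i else 0)"
proof -
  have "((Em l k :: 'a mat) *\<^sub>v a) $ i = (\<Sum>t<2*(l*k). (if t = tau l k i \<and> inS l k i then a $ t else 0))"
    unfolding mv_index[OF Em_carrier a i]
    by (rule sum.cong[OF refl]) (use sg_iff[OF k i] i in \<open>auto simp: Em_def\<close>)
  also have "\<dots> = (if inS l k i then a $ tau l k i else 0)"
    using tau_props[OF k i] by (cases "inS l k i") (auto simp: sum.delta')
  finally show ?thesis .
qed

lemma Em_sg:
  assumes k: "0 < k" and a: "a \<in> carrier_vec (2*(l*k))" and j: "j < 2*(l*k)"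
  shows "((Em l k :: 'a::field mat) *\<^sub>v a) $ (sg l k j) = a $ j"
  using Em_mv[OF k a] sg_props[OF k j] by auto

lemma Em_supp:
  assumes k: "0 < k" and a: "a \<in> carrier_vec (2*(l*k))" and i: "i < 2*l*(2*k)" and n: "\<not> inS l k i"
  shows "((Em l k :: 'a::field mat) *\<^sub>v a) $ i = 0"
  using Em_mv[OF k a i] n by simp

lemma Em_inj:
  assumes k: "0 < k" and a: "a \<in> carrier_vec (2*(l*k))" and z: "((Em l k :: 'a::field mat) *\<^sub>v a) = 0\<^sub>v (2*l*(2*k))"
  shows "a = 0\<^sub>v (2*(l*k))"
proof (rule eq_vecI)
  fix j assume "j < dim_vec (0\<^sub>v (2*(l*k)) :: 'a vec)"
  then have j: "j < 2*(l*k)" by simp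
  have "a $ j = ((Em l k :: 'a mat) *\<^sub>v a) $ (sg l k j)" using Em_sg[OF k a j] by simp
  also have "\<dots> = 0" unfolding z using sg_props[OF k j] by simp
  finally show "a $ j = 0\<^sub>v (2*(l*k)) $ j" using j by simp
qed (use a in auto)

lemma BE_EC:
  fixes l k :: nat
  assumes l: "0 < l" and k: "0 < k"
  shows "kron (Ind2 (Jblock l)) (Ind2 (Jblock k)) * Em l k = (Em l k * Ind2 (kron (Jblock l) (Jblock k)) :: 'a::field mat)"
proof (rule eq_matI)
  let ?B = "kron (Ind2 (Jblock l)) (Ind2 (Jblock k)) :: 'a mat"
  let ?C = "Ind2 (kron (Jblock l) (Jblock k)) :: 'a mat"
  let ?E = "Em l k :: 'a mat"
  have KJ: "kron (Jblock l) (Jblock k) \<in> carrier_mat (l*k) (l*k)" by (rule kron_carrier[OF Jblock_carrier Jblock_carrier])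
  have B: "?B \<in> carrier_mat (2*l*(2*k)) (2*l*(2*k))" by (rule kron_carrier[OF Ind2_carrier[OF Jblock_carrier] Ind2_carrier[OF Jblock_carrier]])
  have C: "?C \<in> carrier_mat (2*(l*k)) (2*(l*k))" by (rule Ind2_carrier[OF KJ])
  fix i j assume i: "i < dim_row (?E * ?C)" and j: "j < dim_col (?E * ?C)"
  then have i: "i < 2*l*(2*k)" and j: "j < 2*(l*k)" using C Em_carrier[of l k] by auto
  have sj: "sg l k j < 2*l*(2*k)" using sg_props[OF k j] by simp
  have colE: "col ?E j = unit_vec (2*l*(2*k)) (sg l k j)"
    by (rule eq_vecI) (use j sj in \<open>auto simp: Em_def\<close>)
  have LHS: "(?B * ?E) $$ (i,j) = ?B $$ (i, sg l k j)"
    using i j B Em_carrier[of l k] colE sj by simp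
  have cC: "col ?C j \<in> carrier_vec (2*(l*k))" using C by (simp add: carrier_vecI carrier_matD)
  have RHS: "(?E * ?C) $$ (i,j) = (if inS l k i then ?C $$ (tau l k i, j) else 0)"
  proof -
    have "(?E * ?C) $$ (i,j) = (?E *\<^sub>v col ?C j) $ i" using i j C Em_carrier[of l k] by simp
    also have "\<dots> = (if inS l k i then col ?C j $ tau l k i else 0)" by (rule Em_mv[OF k cC i])
    finally show ?thesis using tau_props[OF k i] j C by auto
  qed
  define a where "a = i div (2*k)"
  define b where "b = i mod (2*k)"
  have a: "a < 2*l" unfolding a_def using i k by (simp add: less_mult_imp_div_less mult.assoc)
  have b: "b < 2*k" unfolding b_def using k by simp
  have Bi: "?B $$ (i, sg l k j) = Ind2 (Jblock l) $$ (a, sg l k j div (2*k)) * Ind2 (Jblock k) $$ (b, sg l k j mod (2*k))"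
    unfolding a_def b_def by (rule kron_index[OF Ind2_carrier[OF Jblock_carrier] Ind2_carrier[OF Jblock_carrier] i sj])
  have inSab: "inS l k i = (a < l \<longleftrightarrow> b < k)" unfolding inS_def a_def b_def ..
  have tlo: "tau l k i = a*k + b" if "a < l" unfolding tau_def a_def b_def using that a_def by simp
  have thi: "tau l k i = l*k + ((a - l)*k + (b - k))" if "\<not> a < l" unfolding tau_def a_def b_def using that a_def by simp
  show "(?B * ?E) $$ (i,j) = (?E * ?C) $$ (i,j)"
    unfolding LHS RHS
  proof (cases "j < l*k")
    case True
    define c where "c = j div k"
    define e where "e = j mod k"
    have c: "c < l" unfolding c_def using True k by (simp add: less_mult_imp_div_less)
    have e: "e < k" unfolding e_def using k by simp
    have je: "j = c*k + e" unfolding c_def e_def by simp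
    have Bv: "?B $$ (i, sg l k j) = (if \<not> a < l \<and> \<not> b < k \<and> a - l = c \<and> b - k = e then 1 else 0)"
      unfolding Bi sg_lo[OF k True] c_def[symmetric] e_def[symmetric]
      using a b c e by (auto simp: Ind2_index[OF Jblock_carrier] mult_2)
    show "?B $$ (i, sg l k j) = (if inS l k i then ?C $$ (tau l k i, j) else 0)"
    proof (cases "a < l")
      case True
      then show ?thesis unfolding Bv inSab
      proof -
        have "b < k \<Longrightarrow> a*k+b < l*k" using lt_mult_bound[of a l b k] True by simp
        then show "(if \<not> a < l \<and> \<not> b < k \<and> a - l = c \<and> b - k = e then 1 else 0) =
          (if a < l = (b < k) then ?C $$ (tau l k i, j) else 0)"
          using tlo[OF True] True j b \<open>j < l*k\<close> by (auto simp: Ind2_index[OF KJ])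
      qed
    next
      case False
      note aF = False
      show ?thesis
      proof (cases "b < k")
        case True then show ?thesis unfolding Bv inSab using aF by simp
      next
        case False
        have b2: "b - k < k" using b by simp
        have a2: "a - l < l" using a aF by simp
        have tb: "tau l k i < 2*(l*k)" using tau_props[OF k i] inSab aF False by simp
        have eqv: "((a - l)*k + (b - k) = c*k + e) \<longleftrightarrow> (a - l = c \<and> b - k = e)"
          using dm[OF b2, of "a-l"] dm[OF e, of c] by metis
        show ?thesis unfolding Bv inSab using aF False thi[OF aF] tb \<open>j < l*k\<close> eqv je
          by (auto simp: Ind2_index[OF KJ])
      qed
    qed
  next
    case False
    define c where "c = (j - l*k) div k"
    define e where "e = (j - l*k) mod k"
    have j1: "j - l*k < l*k" using j False by auto
    have c: "c < l" unfolding c_def using j1 k by (simp add: less_mult_imp_div_less)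
    have e: "e < k" unfolding e_def using k by simp
    have je: "j - l*k = c*k + e" unfolding c_def e_def by simp
    have Bv: "?B $$ (i, sg l k j) = (if a < l \<and> b < k then Jblock l $$ (a,c) * Jblock k $$ (b,e) else 0)"
      unfolding Bi sg_hi[OF k False] c_def[symmetric] e_def[symmetric]
      using a b c e by (auto simp: Ind2_index[OF Jblock_carrier] mult_2)
    show "?B $$ (i, sg l k j) = (if inS l k i then ?C $$ (tau l k i, j) else 0)"
    proof (cases "a < l \<and> b < k")
      case True
      have tl: "tau l k i < l*k" using tlo True lt_mult_bound[of a l b k] by auto
      have "?C $$ (tau l k i, j) = kron (Jblock l) (Jblock k) $$ (tau l k i, j - l*k)"
        using tl j False by (simp add: Ind2_index[OF KJ])
      also have "\<dots> = Jblock l $$ (a,c) * Jblock k $$ (b,e)"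
        using kron_index[OF Jblock_carrier Jblock_carrier tl j1] tlo True dm[of b k a] je dm[OF e, of c] by auto
      finally show ?thesis unfolding Bv inSab using True by simp
    next
      case nF: False
      show ?thesis
      proof (cases "inS l k i")
        case True
        then have aF: "\<not> a < l" "\<not> b < k" using nF inSab by auto
        have tb: "tau l k i < 2*(l*k)" using tau_props[OF k i True] by simp
        have tge: "\<not> tau l k i < l*k" using thi[OF aF(1)] by simp
        have "?C $$ (tau l k i, j) = 0" using tb tge j False by (simp add: Ind2_index[OF KJ])
        then show ?thesis unfolding Bv using True aF by simp
      qed (use nF Bv in auto)
    qed
  qed
qed (auto simp: Em_def Ind2_def kron_def Jblock_def algebra_simps)

lemma K_S:
  assumes k: "0 < k" and z: "z \<in> carrier_vec (2*l*(2*k))"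
    and S: "\<And>t. t < 2*l*(2*k) \<Longrightarrow> \<not> inS l k t \<Longrightarrow> z $ t = 0"
    and i: "i < 2*l*(2*k)" and iS: "inS l k i"
  shows "(kron (1\<^sub>m (2*l)) (Ind2 (Jblock k)) *\<^sub>v z) $ i = (0::'a::field)"
proof -
  have KC: "kron (1\<^sub>m (2*l)) (Ind2 (Jblock k)) \<in> carrier_mat (2*l*(2*k)) (2*l*(2*k))"
    by (rule kron_carrier[OF one_carrier_mat Ind2_carrier[OF Jblock_carrier]])
  have "(kron (1\<^sub>m (2*l)) (Ind2 (Jblock k)) *\<^sub>v z) $ i = (\<Sum>t<2*l*(2*k). (0::'a))"
    unfolding mv_index[OF KC z i]
  proof (rule sum.cong[OF refl])
    fix t assume t: "t \<in> {..<2*l*(2*k)}"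
    show "kron (1\<^sub>m (2*l)) (Ind2 (Jblock k)) $$ (i,t) * z $ t = 0"
    proof (cases "inS l k t")
      case False then show ?thesis using S t by simp
    next
      case True
      have e: "kron (1\<^sub>m (2*l)) (Ind2 (Jblock k) :: 'a mat) $$ (i,t) = (1\<^sub>m (2*l) :: 'a mat) $$ (i div (2*k), t div (2*k)) * Ind2 (Jblock k) $$ (i mod (2*k), t mod (2*k))"
        using t by (intro kron_index[OF one_carrier_mat Ind2_carrier[OF Jblock_carrier] i]) auto
      have a1: "i div (2*k) < 2*l" "t div (2*k) < 2*l" using i t k by (auto simp: less_mult_imp_div_less mult.assoc)
      have b1: "i mod (2*k) < 2*k" "t mod (2*k) < 2*k" using k by auto
      show ?thesis
      proof (cases "i div (2*k) = t div (2*k)")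
        case False then show ?thesis unfolding e using a1 by simp
      next
        case eq: True
        have "(i mod (2*k) < k) = (t mod (2*k) < k)" using iS True eq unfolding inS_def by simp
        then have "(Ind2 (Jblock k) :: 'a mat) $$ (i mod (2*k), t mod (2*k)) = 0"
          using b1 by (auto simp: Ind2_index[OF Jblock_carrier])
        then show ?thesis unfolding e by simp
      qed
    qed
  qed
  then show ?thesis by simp
qed

lemma ortho_core:
  fixes Phi1 Phi2 :: "'a::field mat"
  assumes k: "0 < k" and P1: "Phi1 \<in> carrier_mat (2*l) (2*l)" and P2: "Phi2 \<in> carrier_mat (2*k) (2*k)"
    and Z1: "\<And>a b. a < 2*l \<Longrightarrow> b < 2*l \<Longrightarrow> (a < l \<longleftrightarrow> b < l) \<Longrightarrow> Phi1 $$ (a,b) = 0"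
    and Z2: "\<And>a b. a < 2*k \<Longrightarrow> b < 2*k \<Longrightarrow> (a < k \<longleftrightarrow> b < k) \<Longrightarrow> Phi2 $$ (a,b) = 0"
    and z: "z \<in> carrier_vec (2*l*(2*k))" and z': "z' \<in> carrier_vec (2*l*(2*k))"
    and S: "\<And>t. t < 2*l*(2*k) \<Longrightarrow> \<not> inS l k t \<Longrightarrow> z $ t = 0"
    and S': "\<And>t. t < 2*l*(2*k) \<Longrightarrow> inS l k t \<Longrightarrow> z' $ t = 0"
  shows "z \<bullet> (kron Phi1 Phi2 *\<^sub>v z') = 0"
proof -
  have KC: "kron Phi1 Phi2 \<in> carrier_mat (2*l*(2*k)) (2*l*(2*k))" by (rule kron_carrier[OF P1 P2])
  have Kz: "kron Phi1 Phi2 *\<^sub>v z' \<in> carrier_vec (2*l*(2*k))" using KC z' by simp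
  have "z \<bullet> (kron Phi1 Phi2 *\<^sub>v z') = (\<Sum>i<2*l*(2*k). z $ i * (kron Phi1 Phi2 *\<^sub>v z') $ i)"
    by (rule sp_index[OF Kz])
  also have "\<dots> = (\<Sum>i<2*l*(2*k). 0)"
  proof (rule sum.cong[OF refl])
    fix i assume i: "i \<in> {..<2*l*(2*k)}"
    show "z $ i * (kron Phi1 Phi2 *\<^sub>v z') $ i = 0"
    proof (cases "inS l k i")
      case False then show ?thesis using S i by simp
    next
      case iS: True
      have i': "i < 2*l*(2*k)" using i by simp
      have "(kron Phi1 Phi2 *\<^sub>v z') $ i = (\<Sum>j<2*l*(2*k). kron Phi1 Phi2 $$ (i,j) * z' $ j)"
        by (rule mv_index[OF KC z' i'])
      also have "\<dots> = (\<Sum>j<2*l*(2*k). 0)"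
      proof (rule sum.cong[OF refl])
        fix j assume j: "j \<in> {..<2*l*(2*k)}"
        show "kron Phi1 Phi2 $$ (i,j) * z' $ j = 0"
        proof (cases "inS l k j")
          case True then show ?thesis using S' j by simp
        next
          case jS: False
          have j': "j < 2*l*(2*k)" using j by simp
          have a1: "i div (2*k) < 2*l" "j div (2*k) < 2*l" using i' j' k by (auto simp: less_mult_imp_div_less mult.assoc)
          have b1: "i mod (2*k) < 2*k" "j mod (2*k) < 2*k" using k by auto
          have "Phi1 $$ (i div (2*k), j div (2*k)) = 0 \<or> Phi2 $$ (i mod (2*k), j mod (2*k)) = 0"
            using Z1[OF a1] Z2[OF b1] iS jS unfolding inS_def by blast
          then show ?thesis using kron_index[OF P1 P2 i' j'] by auto
        qed
      qed
      finally have "(kron Phi1 Phi2 *\<^sub>v z') $ i = 0" by simp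
      then show ?thesis by simp
    qed
  qed
  finally show ?thesis by simp
qed

lemma Jblock_dims[simp]: "dim_row (Jblock m) = m" "dim_col (Jblock m) = m" unfolding Jblock_def by auto

lemma Jblock_inj:
  assumes y: "y \<in> carrier_vec m" and z: "(Jblock m :: 'a::field mat) *\<^sub>v y = 0\<^sub>v m"
  shows "y = 0\<^sub>v m"
proof -
  have ut: "upper_triangular (Jblock m :: 'a mat)" unfolding upper_triangular_def Jblock_def by auto
  have "\<forall>x\<in>set (diag_mat (Jblock m :: 'a mat)). x = 1" unfolding diag_mat_def Jblock_def by auto
  then have "det (Jblock m :: 'a mat) = 1" using det_upper_triangular[OF ut Jblock_carrier] prod_list_ones by metis
  then have "det (Jblock m :: 'a mat) \<noteq> 0" by simp
  then show ?thesis using det_0_iff_vec_prod_zero_field[OF Jblock_carrier] y z by blast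
qed

lemma Ind2J_inj:
  assumes v: "v \<in> carrier_vec (2*m)" and z: "Ind2 (Jblock m :: 'a::field mat) *\<^sub>v v = 0\<^sub>v (2*m)"
  shows "v = 0\<^sub>v (2*m)"
proof -
  define x where "x = vec_first v m"
  define y where "y = vec_last v m"
  have v': "v \<in> carrier_vec (m+m)" using v by (simp add: mult_2)
  have vxy: "v = x @\<^sub>v y" unfolding x_def y_def using vec_first_last_append[OF v'] by simp
  have xc: "x \<in> carrier_vec m" and yc: "y \<in> carrier_vec m" unfolding x_def y_def by auto
  have "Ind2 (Jblock m :: 'a mat) *\<^sub>v v = (0\<^sub>m m m *\<^sub>v x + Jblock m *\<^sub>v y) @\<^sub>v (1\<^sub>m m *\<^sub>v x + 0\<^sub>m m m *\<^sub>v y)"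
    unfolding vxy Ind2_def Jblock_dims
    by (rule four_block_mat_mult_vec[OF zero_carrier_mat Jblock_carrier one_carrier_mat zero_carrier_mat xc yc])
  also have "\<dots> = (Jblock m *\<^sub>v y) @\<^sub>v x" using xc yc Jblock_carrier[of m] by auto
  finally have e: "Ind2 (Jblock m :: 'a mat) *\<^sub>v v = (Jblock m *\<^sub>v y) @\<^sub>v x" .
  have Jy: "(Jblock m :: 'a mat) *\<^sub>v y \<in> carrier_vec m" using mult_mat_vec_carrier[OF Jblock_carrier yc] .
  have y0: "(Jblock m :: 'a mat) *\<^sub>v y = 0\<^sub>v m"
  proof (rule eq_vecI)
    fix i assume "i < dim_vec (0\<^sub>v m :: 'a vec)"
    then have i: "i < m" by simp
    have "((Jblock m *\<^sub>v y) @\<^sub>v x) $ i = (0\<^sub>v (2*m) :: 'a vec) $ i" using z e i by simp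
    then show "((Jblock m :: 'a mat) *\<^sub>v y) $ i = 0\<^sub>v m $ i" using i Jy by simp
  qed (use Jy in auto)
  have x0: "x = 0\<^sub>v m"
  proof (rule eq_vecI)
    fix i assume "i < dim_vec (0\<^sub>v m :: 'a vec)"
    then have i: "i < m" by simp
    have "((Jblock m *\<^sub>v y) @\<^sub>v x) $ (m+i) = (0\<^sub>v (2*m) :: 'a vec) $ (m+i)" using z e i by simp
    then show "x $ i = 0\<^sub>v m $ i" using i Jy xc by simp
  qed (use xc in auto)
  have "y = 0\<^sub>v m" by (rule Jblock_inj[OF yc y0])
  then show ?thesis unfolding vxy using x0 by (auto simp: mult_2)
qed

lemma range_submod_iso:
  fixes U G Cm :: "'a::field mat"
  assumes U: "U \<in> carrier_mat N N" and G: "G \<in> carrier_mat N n" and Cm: "Cm \<in> carrier_mat n n"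
    and rel: "U * G = G * Cm"
    and inj: "\<And>a. a \<in> carrier_vec n \<Longrightarrow> G *\<^sub>v a = 0\<^sub>v N \<Longrightarrow> a = 0\<^sub>v n"
  shows "submodule_of U ((\<lambda>a. G *\<^sub>v a) ` carrier_vec n) \<and> module_iso U ((\<lambda>a. G *\<^sub>v a) ` carrier_vec n) Cm"
proof -
  let ?W = "(\<lambda>a. G *\<^sub>v a) ` carrier_vec n"
  have add: "G *\<^sub>v (a + b) = G *\<^sub>v a + G *\<^sub>v b" if "a \<in> carrier_vec n" "b \<in> carrier_vec n" for a b
    using mult_add_distrib_mat_vec[OF G that] .
  have sm: "G *\<^sub>v (c \<cdot>\<^sub>v a) = c \<cdot>\<^sub>v (G *\<^sub>v a)" if "a \<in> carrier_vec n" for a c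
    using mult_mat_vec[OF G that] .
  have UG: "U *\<^sub>v (G *\<^sub>v a) = G *\<^sub>v (Cm *\<^sub>v a)" if "a \<in> carrier_vec n" for a
  proof -
    have "U *\<^sub>v (G *\<^sub>v a) = (U * G) *\<^sub>v a" using U G that by simp
    also have "\<dots> = (G * Cm) *\<^sub>v a" using rel by simp
    also have "\<dots> = G *\<^sub>v (Cm *\<^sub>v a)" using G Cm that by simp
    finally show ?thesis .
  qed
  have injon: "inj_on (\<lambda>a. G *\<^sub>v a) (carrier_vec n)"
  proof (rule inj_onI)
    fix a b assume a: "a \<in> carrier_vec n" and b: "b \<in> carrier_vec n" and e: "G *\<^sub>v a = G *\<^sub>v b"
    have "G *\<^sub>v (a - b) = G *\<^sub>v a - G *\<^sub>v b" using mult_minus_distrib_mat_vec[OF G a b] .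
    also have "\<dots> = 0\<^sub>v N" using e G b by simp
    finally have ab: "a - b = 0\<^sub>v n" using inj a b by simp
    show "a = b"
    proof (rule eq_vecI)
      fix i assume "i < dim_vec b"
      then have i: "i < n" using b by simp
      have "(a - b) $ i = 0" using ab i by simp
      then show "a $ i = b $ i" using i b by simp
    qed (use a b in simp)
  qed
  have sub: "submodule_of U ?W"
    unfolding submodule_of_def subspace_of_def
  proof (intro conjI ballI allI)
    show "?W \<subseteq> carrier_vec (dim_row U)" using G U by auto
    show "0\<^sub>v (dim_row U) \<in> ?W" using G U by (intro image_eqI[of _ _ "0\<^sub>v n"]) auto
    fix x assume "x \<in> ?W"
    then obtain a where a: "a \<in> carrier_vec n" and x: "x = G *\<^sub>v a" by auto
    { fix y assume "y \<in> ?W"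
      then obtain b where b: "b \<in> carrier_vec n" and y: "y = G *\<^sub>v b" by auto
      show "x + y \<in> ?W" unfolding x y using add[OF a b, symmetric] a b by auto }
    { fix c show "c \<cdot>\<^sub>v x \<in> ?W" unfolding x using sm[OF a, symmetric] a by auto }
    show "U *\<^sub>v x \<in> ?W" unfolding x using UG[OF a] a Cm by auto
  qed
  define f where "f = inv_into (carrier_vec n) (\<lambda>a. G *\<^sub>v a)"
  have bij: "bij_betw (\<lambda>a. G *\<^sub>v a) (carrier_vec n) ?W" using injon by (simp add: bij_betw_def)
  have ff: "f (G *\<^sub>v a) = a" if "a \<in> carrier_vec n" for a unfolding f_def using injon that by simp
  have iso: "module_iso U ?W Cm"
    unfolding module_iso_def
  proof (intro exI[of _ f] conjI ballI allI)
    show "bij_betw f ?W (carrier_vec (dim_row Cm))" using bij_betw_inv_into[OF bij] Cm unfolding f_def by simp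
    fix x assume "x \<in> ?W"
    then obtain a where a: "a \<in> carrier_vec n" and x: "x = G *\<^sub>v a" by auto
    { fix y assume "y \<in> ?W"
      then obtain b where b: "b \<in> carrier_vec n" and y: "y = G *\<^sub>v b" by auto
      show "f (x + y) = f x + f y" unfolding x y add[OF a b, symmetric] using ff a b by simp }
    { fix c show "f (c \<cdot>\<^sub>v x) = c \<cdot>\<^sub>v f x" unfolding x sm[OF a, symmetric] using ff a by simp }
    show "f (U *\<^sub>v x) = Cm *\<^sub>v f x" unfolding x UG[OF a] using ff a Cm by simp
  qed
  show ?thesis using sub iso by simp
qed

lemma append_vec_empty: "y \<in> carrier_vec 0 \<Longrightarrow> x @\<^sub>v y = x"
  by (rule eq_vecI) auto

lemma mv_zero: "A \<in> carrier_mat nr n \<Longrightarrow> A *\<^sub>v 0\<^sub>v n = (0\<^sub>v nr :: 'a::field vec)"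
  by (intro eq_vecI) (auto simp: scalar_prod_def)

theorem lemma7p3:
  fixes q l k :: nat
  assumes "alg_closed TYPE('a::field)"
    and "(2::'a) = 0"
    and "\<exists>e. q = 2 ^ e"
    and "odd l" and "odd k" and "0 < l" and "l \<le> q div 2" and "0 < k" and "k \<le> q div 2"
  shows "\<exists>W W'.
     submodule_of (kron (Vu (2*l)) (Vu (2*k)) :: 'a mat) W \<and>
     submodule_of (kron (Vu (2*l)) (Vu (2*k)) :: 'a mat) W' \<and>
     W \<inter> W' = {0\<^sub>v (2*l*(2*k))} \<and>
     (\<forall>v\<in>carrier_vec (2*l*(2*k)). \<exists>w\<in>W. \<exists>w'\<in>W'. v = w + w') \<and>
     (\<forall>w\<in>W. \<forall>w'\<in>W'. bil (kron (Vform (2*l)) (Vform (2*k))) w w' = 0) \<and>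
     module_iso (kron (Vu (2*l)) (Vu (2*k))) W (Ind2 (kron (Jblock l) (Jblock k))) \<and>
     module_iso (kron (Vu (2*l)) (Vu (2*k))) W' (Ind2 (kron (Jblock l) (Jblock k)))"
proof -
  note two = assms(2)
  have l0: "0 < l" and k0: "0 < k" using assms by auto
  obtain P Pi where P: "P \<in> carrier_mat (2*l) (2*l)" "Pi \<in> carrier_mat (2*l) (2*l)" "P * Pi = 1\<^sub>m (2*l)" "Pi * P = 1\<^sub>m (2*l)"
    "(Vu (2*l) :: 'a mat) * P = P * Ind2 (Jblock l)"
    "\<And>a b. a < 2*l \<Longrightarrow> b < 2*l \<Longrightarrow> (a < l \<longleftrightarrow> b < l) \<Longrightarrow> (transpose_mat P * (Vform (2*l) * P)) $$ (a,b) = 0"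
    using single[OF assms(4) two] by blast
  obtain Q Qi where Q: "Q \<in> carrier_mat (2*k) (2*k)" "Qi \<in> carrier_mat (2*k) (2*k)" "Q * Qi = 1\<^sub>m (2*k)" "Qi * Q = 1\<^sub>m (2*k)"
    "(Vu (2*k) :: 'a mat) * Q = Q * Ind2 (Jblock k)"
    "\<And>a b. a < 2*k \<Longrightarrow> b < 2*k \<Longrightarrow> (a < k \<longleftrightarrow> b < k) \<Longrightarrow> (transpose_mat Q * (Vform (2*k) * Q)) $$ (a,b) = 0"
    using single[OF assms(5) two] by blast
  define n where "n = 2*(l*k)"
  define N where "N = 2*l*(2*k)"
  define U where "U = (kron (Vu (2*l)) (Vu (2*k)) :: 'a mat)"
  define T where "T = kron P Q"
  define Ti where "Ti = kron Pi Qi"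
  define B where "B = (kron (Ind2 (Jblock l)) (Ind2 (Jblock k)) :: 'a mat)"
  define C where "C = (Ind2 (kron (Jblock l) (Jblock k)) :: 'a mat)"
  define E where "E = (Em l k :: 'a mat)"
  define K where "K = (kron (1\<^sub>m (2*l)) (Ind2 (Jblock k)) :: 'a mat)"
  have IJl: "Ind2 (Jblock l :: 'a mat) \<in> carrier_mat (2*l) (2*l)" by (rule Ind2_carrier[OF Jblock_carrier])
  have IJk: "Ind2 (Jblock k :: 'a mat) \<in> carrier_mat (2*k) (2*k)" by (rule Ind2_carrier[OF Jblock_carrier])
  have Uc: "U \<in> carrier_mat N N" unfolding U_def N_def by (rule kron_carrier[OF Vu_carrier Vu_carrier])
  have Tc: "T \<in> carrier_mat N N" unfolding T_def N_def by (rule kron_carrier[OF P(1) Q(1)])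
  have Tic: "Ti \<in> carrier_mat N N" unfolding Ti_def N_def by (rule kron_carrier[OF P(2) Q(2)])
  have Bc: "B \<in> carrier_mat N N" unfolding B_def N_def by (rule kron_carrier[OF IJl IJk])
  have Kc: "K \<in> carrier_mat N N" unfolding K_def N_def by (rule kron_carrier[OF one_carrier_mat IJk])
  have Ec: "E \<in> carrier_mat N n" unfolding E_def N_def n_def by (rule Em_carrier)
  have Cc: "C \<in> carrier_mat n n" unfolding C_def n_def by (rule Ind2_carrier[OF kron_carrier[OF Jblock_carrier Jblock_carrier]])
  have TiT: "Ti * T = 1\<^sub>m N"
  proof -
    have "Ti * T = kron (Pi * P) (Qi * Q)" unfolding Ti_def T_def by (rule kron_mult[OF P(2) Q(2) P(1) Q(1)])
    also have "\<dots> = kron (1\<^sub>m (2*l)) (1\<^sub>m (2*k))" unfolding P(4) Q(4) ..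
    also have "\<dots> = 1\<^sub>m N" unfolding N_def by (rule kron_one)
    finally show ?thesis .
  qed
  have TTi: "T * Ti = 1\<^sub>m N"
  proof -
    have "T * Ti = kron (P * Pi) (Q * Qi)" unfolding Ti_def T_def by (rule kron_mult[OF P(1) Q(1) P(2) Q(2)])
    also have "\<dots> = kron (1\<^sub>m (2*l)) (1\<^sub>m (2*k))" unfolding P(3) Q(3) ..
    also have "\<dots> = 1\<^sub>m N" unfolding N_def by (rule kron_one)
    finally show ?thesis .
  qed
  have UT: "U * T = T * B"
  proof -
    have "U * T = kron (Vu (2*l) * P) (Vu (2*k) * Q)" unfolding U_def T_def by (rule kron_mult[OF Vu_carrier Vu_carrier P(1) Q(1)])
    also have "\<dots> = kron (P * Ind2 (Jblock l)) (Q * Ind2 (Jblock k))" unfolding P(5) Q(5) ..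
    also have "\<dots> = T * B" unfolding T_def B_def by (rule kron_mult[OF P(1) Q(1) IJl IJk, symmetric])
    finally show ?thesis .
  qed
  have BE: "B * E = E * C" unfolding B_def E_def C_def by (rule BE_EC[OF l0 k0])
  have BK: "B * K = K * B"
  proof -
    have "B * K = kron (Ind2 (Jblock l) * 1\<^sub>m (2*l)) (Ind2 (Jblock k) * Ind2 (Jblock k))"
      unfolding B_def K_def by (rule kron_mult[OF IJl IJk one_carrier_mat IJk])
    also have "\<dots> = kron (1\<^sub>m (2*l) * Ind2 (Jblock l)) (Ind2 (Jblock k) * Ind2 (Jblock k))"
      using right_mult_one_mat[OF IJl] left_mult_one_mat[OF IJl] by simp
    also have "\<dots> = K * B" unfolding B_def K_def by (rule kron_mult[OF one_carrier_mat IJk IJl IJk, symmetric])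
    finally show ?thesis .
  qed
  have "\<exists>B\<in>carrier_mat (2*k) (2*k). Ind2 (Jblock k) * B = 1\<^sub>m (2*k) \<and> B * Ind2 (Jblock k) = (1\<^sub>m (2*k) :: 'a mat)"
    by (rule sq_inv[OF IJk Ind2J_inj])
  then obtain R where R: "R \<in> carrier_mat (2*k) (2*k)" "R * Ind2 (Jblock k) = (1\<^sub>m (2*k) :: 'a mat)"
    by blast
  have KiK: "kron (1\<^sub>m (2*l)) R * K = 1\<^sub>m N"
  proof -
    have "kron (1\<^sub>m (2*l)) R * K = kron (1\<^sub>m (2*l) * 1\<^sub>m (2*l)) (R * Ind2 (Jblock k))"
      unfolding K_def by (rule kron_mult[OF one_carrier_mat R(1) one_carrier_mat IJk])
    also have "\<dots> = kron (1\<^sub>m (2*l)) (1\<^sub>m (2*k))" unfolding R(2) by simp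
    also have "\<dots> = 1\<^sub>m N" unfolding N_def by (rule kron_one)
    finally show ?thesis .
  qed
  have Tcancel: "Ti *\<^sub>v (T *\<^sub>v x) = x" if "x \<in> carrier_vec N" for x
  proof -
    have "Ti *\<^sub>v (T *\<^sub>v x) = (Ti * T) *\<^sub>v x" by (rule assoc_mult_mat_vec[symmetric, OF Tic Tc that])
    then show ?thesis using TiT that by simp
  qed
  have Kcancel: "kron (1\<^sub>m (2*l)) R *\<^sub>v (K *\<^sub>v x) = x" if "x \<in> carrier_vec N" for x
  proof -
    have "kron (1\<^sub>m (2*l)) R \<in> carrier_mat N N" unfolding N_def by (rule kron_carrier[OF one_carrier_mat R(1)])
    then have "kron (1\<^sub>m (2*l)) R *\<^sub>v (K *\<^sub>v x) = (kron (1\<^sub>m (2*l)) R * K) *\<^sub>v x"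
      using assoc_mult_mat_vec[symmetric, OF _ Kc that] by blast
    then show ?thesis using KiK that by simp
  qed
  have Esupp: "\<And>(a::'a vec) t. a \<in> carrier_vec n \<Longrightarrow> t < N \<Longrightarrow> \<not> inS l k t \<Longrightarrow> (E *\<^sub>v a) $ t = 0"
    unfolding E_def n_def N_def using Em_supp[OF k0] by blast
  have KEsupp: "\<And>(a::'a vec) t. a \<in> carrier_vec n \<Longrightarrow> t < N \<Longrightarrow> inS l k t \<Longrightarrow> (K *\<^sub>v (E *\<^sub>v a)) $ t = 0"
  proof -
    fix a :: "'a vec" and t assume a: "a \<in> carrier_vec n" and t: "t < N" and tS: "inS l k t"
    have Ea: "E *\<^sub>v a \<in> carrier_vec (2*l*(2*k))" using Ec a N_def by simp
    show "(K *\<^sub>v (E *\<^sub>v a)) $ t = 0" unfolding K_def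
      by (rule K_S[OF k0 Ea _ _ tS]) (use Esupp[OF a] t N_def in auto)
  qed
  have Esg: "\<And>(a::'a vec) j. a \<in> carrier_vec n \<Longrightarrow> j < n \<Longrightarrow> (E *\<^sub>v a) $ (sg l k j) = a $ j"
    unfolding E_def n_def using Em_sg[OF k0] by blast
  have sgS: "\<And>j. j < n \<Longrightarrow> sg l k j < N \<and> inS l k (sg l k j)" unfolding n_def N_def using sg_props[OF k0] by blast
  have Einj: "\<And>(a::'a vec). a \<in> carrier_vec n \<Longrightarrow> E *\<^sub>v a = 0\<^sub>v N \<Longrightarrow> a = 0\<^sub>v n"
    unfolding E_def n_def N_def using Em_inj[OF k0] by blast
  have sep: "a = 0\<^sub>v n \<and> b = 0\<^sub>v n" if a: "a \<in> carrier_vec n" and b: "b \<in> carrier_vec n"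
    and z: "E *\<^sub>v a + K *\<^sub>v (E *\<^sub>v b) = 0\<^sub>v N" for a b
  proof -
    have Ea: "E *\<^sub>v a \<in> carrier_vec N" and KEb: "K *\<^sub>v (E *\<^sub>v b) \<in> carrier_vec N" using Ec Kc a b by auto
    have a0: "a = 0\<^sub>v n"
    proof (rule eq_vecI)
      fix j assume "j < dim_vec (0\<^sub>v n :: 'a vec)"
      then have j: "j < n" by simp
      have s0: "(E *\<^sub>v a + K *\<^sub>v (E *\<^sub>v b)) $ (sg l k j) = 0" using z sgS[OF j] by simp
      have "(E *\<^sub>v a + K *\<^sub>v (E *\<^sub>v b)) $ (sg l k j) = (E *\<^sub>v a) $ (sg l k j) + (K *\<^sub>v (E *\<^sub>v b)) $ (sg l k j)"
      proof (rule index_add_vec(1))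
        show "sg l k j < dim_vec (K *\<^sub>v (E *\<^sub>v b))" using Kc sgS[OF j] by auto
      qed
      also have "\<dots> = a $ j" using Esg[OF a j] KEsupp[OF b] sgS[OF j] by simp
      finally show "a $ j = 0\<^sub>v n $ j" using s0 j by simp
    qed (use a in auto)
    then have "E *\<^sub>v a = 0\<^sub>v N" using mv_zero[OF Ec] by simp
    then have "K *\<^sub>v (E *\<^sub>v b) = 0\<^sub>v N" using z KEb by simp
    then have "E *\<^sub>v b = kron (1\<^sub>m (2*l)) R *\<^sub>v 0\<^sub>v N" using Kcancel[of "E *\<^sub>v b"] Ec b by simp
    also have "\<dots> = 0\<^sub>v N" using mv_zero[OF kron_carrier[OF one_carrier_mat R(1), of "2*l"]] unfolding N_def by simp
    finally have "E *\<^sub>v b = 0\<^sub>v N" .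
    then have "b = 0\<^sub>v n" using Einj[OF b] by simp
    then show ?thesis using a0 by simp
  qed
  have sep': "a = 0\<^sub>v n" if a: "a \<in> carrier_vec n" and b: "b \<in> carrier_vec n"
    and z: "E *\<^sub>v a = K *\<^sub>v (E *\<^sub>v b)" for a b
  proof (rule eq_vecI)
    fix j assume "j < dim_vec (0\<^sub>v n :: 'a vec)"
    then have j: "j < n" by simp
    have "a $ j = (E *\<^sub>v a) $ (sg l k j)" using Esg[OF a j] by simp
    also have "\<dots> = 0" unfolding z using KEsupp[OF b] sgS[OF j] by simp
    finally show "a $ j = 0\<^sub>v n $ j" using j by simp
  qed (use a in auto)
  define G1 where "G1 = T * E"
  define G2 where "G2 = T * (K * E)"
  have KEc: "K * E \<in> carrier_mat N n" using Kc Ec by simp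
  have G1c: "G1 \<in> carrier_mat N n" unfolding G1_def using Tc Ec by simp
  have G2c: "G2 \<in> carrier_mat N n" unfolding G2_def using Tc KEc by simp
  have G1v: "G1 *\<^sub>v a = T *\<^sub>v (E *\<^sub>v a)" if "a \<in> carrier_vec n" for a
    unfolding G1_def by (rule assoc_mult_mat_vec[OF Tc Ec that])
  have G2v: "G2 *\<^sub>v a = T *\<^sub>v (K *\<^sub>v (E *\<^sub>v a))" if "a \<in> carrier_vec n" for a
    unfolding G2_def using assoc_mult_mat_vec[OF Tc KEc that] assoc_mult_mat_vec[OF Kc Ec that] by simp
  have rel1: "U * G1 = G1 * C"
  proof -
    have "U * G1 = (U * T) * E" unfolding G1_def by (rule assoc_mult_mat[OF Uc Tc Ec, symmetric])
    also have "\<dots> = (T * B) * E" unfolding UT ..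
    also have "\<dots> = T * (B * E)" by (rule assoc_mult_mat[OF Tc Bc Ec])
    also have "\<dots> = T * (E * C)" unfolding BE ..
    also have "\<dots> = G1 * C" unfolding G1_def by (rule assoc_mult_mat[OF Tc Ec Cc, symmetric])
    finally show ?thesis .
  qed
  have rel2: "U * G2 = G2 * C"
  proof -
    have "U * G2 = (U * T) * (K * E)" unfolding G2_def by (rule assoc_mult_mat[OF Uc Tc KEc, symmetric])
    also have "\<dots> = (T * B) * (K * E)" unfolding UT ..
    also have "\<dots> = T * (B * (K * E))" by (rule assoc_mult_mat[OF Tc Bc KEc])
    also have "B * (K * E) = (B * K) * E" by (rule assoc_mult_mat[OF Bc Kc Ec, symmetric])
    also have "\<dots> = (K * B) * E" unfolding BK ..
    also have "\<dots> = K * (B * E)" by (rule assoc_mult_mat[OF Kc Bc Ec])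
    also have "\<dots> = K * (E * C)" unfolding BE ..
    also have "\<dots> = (K * E) * C" by (rule assoc_mult_mat[OF Kc Ec Cc, symmetric])
    also have "T * ((K * E) * C) = G2 * C" unfolding G2_def by (rule assoc_mult_mat[OF Tc KEc Cc, symmetric])
    finally show ?thesis .
  qed
  have Tz: "x = 0\<^sub>v N" if x: "x \<in> carrier_vec N" and z: "T *\<^sub>v x = 0\<^sub>v N" for x
  proof -
    have "x = Ti *\<^sub>v (T *\<^sub>v x)" using Tcancel[OF x] by simp
    also have "\<dots> = 0\<^sub>v N" unfolding z by (rule mv_zero[OF Tic])
    finally show ?thesis .
  qed
  have inj1: "a = 0\<^sub>v n" if a: "a \<in> carrier_vec n" and z: "G1 *\<^sub>v a = 0\<^sub>v N" for a
  proof -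
    have "E *\<^sub>v a = 0\<^sub>v N" using Tz[of "E *\<^sub>v a"] Ec a z G1v[OF a] by simp
    then show ?thesis using Einj[OF a] by simp
  qed
  have inj2: "b = 0\<^sub>v n" if b: "b \<in> carrier_vec n" and z: "G2 *\<^sub>v b = 0\<^sub>v N" for b
  proof -
    have KEb: "K *\<^sub>v (E *\<^sub>v b) \<in> carrier_vec N" using Kc Ec b by simp
    have "K *\<^sub>v (E *\<^sub>v b) = 0\<^sub>v N" using Tz[OF KEb] z G2v[OF b] by simp
    moreover have "E *\<^sub>v 0\<^sub>v n = 0\<^sub>v N" by (rule mv_zero[OF Ec])
    ultimately have "E *\<^sub>v 0\<^sub>v n + K *\<^sub>v (E *\<^sub>v b) = 0\<^sub>v N" by simp
    then show ?thesis using sep[of "0\<^sub>v n" b] b by simp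
  qed
  define W where "W = (\<lambda>a. G1 *\<^sub>v a) ` carrier_vec n"
  define W' where "W' = (\<lambda>a. G2 *\<^sub>v a) ` carrier_vec n"
  have res1: "submodule_of U W \<and> module_iso U W C"
    unfolding W_def by (rule range_submod_iso[OF Uc G1c Cc rel1 inj1])
  have res2: "submodule_of U W' \<and> module_iso U W' C"
    unfolding W'_def by (rule range_submod_iso[OF Uc G2c Cc rel2 inj2])
  have inter: "W \<inter> W' = {0\<^sub>v N}"
  proof
    show "{0\<^sub>v N} \<subseteq> W \<inter> W'"
      unfolding W_def W'_def using mv_zero[OF G1c] mv_zero[OF G2c]
      by (auto intro!: image_eqI[of _ _ "0\<^sub>v n"])
    show "W \<inter> W' \<subseteq> {0\<^sub>v N}"
    proof
      fix w :: "'a vec" assume "w \<in> W \<inter> W'"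
      then obtain a b where a: "a \<in> carrier_vec n" and b: "b \<in> carrier_vec n"
        and wa: "w = G1 *\<^sub>v a" and wb: "w = G2 *\<^sub>v b" unfolding W_def W'_def by auto
      have "E *\<^sub>v a = Ti *\<^sub>v (T *\<^sub>v (E *\<^sub>v a))" using Tcancel Ec a by simp
      also have "\<dots> = Ti *\<^sub>v (T *\<^sub>v (K *\<^sub>v (E *\<^sub>v b)))" using wa wb G1v[OF a] G2v[OF b] by simp
      also have "\<dots> = K *\<^sub>v (E *\<^sub>v b)" using Tcancel Ec Kc b by simp
      finally have "a = 0\<^sub>v n" using sep'[OF a b] by simp
      then have "w = 0\<^sub>v N" using wa mv_zero[OF G1c] by simp
      then show "w \<in> {0\<^sub>v N}" by simp
    qed
  qed
  have nn: "n + n = N" unfolding n_def N_def by simp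
  define H where "H = four_block_mat E (K * E) (0\<^sub>m 0 n) (0\<^sub>m 0 n)"
  have "H \<in> carrier_mat (N + 0) (n + n)" unfolding H_def by (rule four_block_carrier_mat[OF Ec zero_carrier_mat])
  then have Hc: "H \<in> carrier_mat N N" by (simp only: nn add_0_right)
  have Hv: "H *\<^sub>v (a @\<^sub>v b) = E *\<^sub>v a + K *\<^sub>v (E *\<^sub>v b)" if a: "a \<in> carrier_vec n" and b: "b \<in> carrier_vec n" for a b
  proof -
    have "H *\<^sub>v (a @\<^sub>v b) = (E *\<^sub>v a + (K * E) *\<^sub>v b) @\<^sub>v (0\<^sub>m 0 n *\<^sub>v a + 0\<^sub>m 0 n *\<^sub>v b)"
      unfolding H_def by (rule four_block_mat_mult_vec[OF Ec KEc zero_carrier_mat zero_carrier_mat a b])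
    also have "\<dots> = E *\<^sub>v a + (K * E) *\<^sub>v b" by (rule append_vec_empty[OF add_carrier_vec[OF mult_mat_vec_carrier[OF zero_carrier_mat a] mult_mat_vec_carrier[OF zero_carrier_mat b]]])
    also have "(K * E) *\<^sub>v b = K *\<^sub>v (E *\<^sub>v b)" by (rule assoc_mult_mat_vec[OF Kc Ec b])
    finally show ?thesis .
  qed
  define M where "M = T * H"
  have Mc: "M \<in> carrier_mat N N" unfolding M_def using Tc Hc by simp
  have split: "\<exists>a b. a \<in> carrier_vec n \<and> b \<in> carrier_vec n \<and> v = a @\<^sub>v b" if v: "v \<in> carrier_vec N" for v :: "'a vec"
  proof -
    have v': "v \<in> carrier_vec (n + n)" using v nn by simp
    show ?thesis by (intro exI[of _ "vec_first v n"] exI[of _ "vec_last v n"]) (use vec_first_last_append[OF v'] in auto)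
  qed
  have Mv: "M *\<^sub>v (a @\<^sub>v b) = G1 *\<^sub>v a + G2 *\<^sub>v b" if a: "a \<in> carrier_vec n" and b: "b \<in> carrier_vec n" for a b
  proof -
    have "a @\<^sub>v b \<in> carrier_vec (n + n)" by (rule append_carrier_vec[OF a b])
    then have ab: "a @\<^sub>v b \<in> carrier_vec N" unfolding nn .
    have "M *\<^sub>v (a @\<^sub>v b) = T *\<^sub>v (H *\<^sub>v (a @\<^sub>v b))" unfolding M_def by (rule assoc_mult_mat_vec[OF Tc Hc ab])
    also have "\<dots> = T *\<^sub>v (E *\<^sub>v a) + T *\<^sub>v (K *\<^sub>v (E *\<^sub>v b))" unfolding Hv[OF a b]
      by (rule mult_add_distrib_mat_vec[OF Tc]) (use Ec Kc a b in auto)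
    finally show ?thesis using G1v[OF a] G2v[OF b] by simp
  qed
  have Minj: "v = 0\<^sub>v N" if v: "v \<in> carrier_vec N" and z: "M *\<^sub>v v = 0\<^sub>v N" for v
  proof -
    obtain a b where a: "a \<in> carrier_vec n" and b: "b \<in> carrier_vec n" and vab: "v = a @\<^sub>v b" using split[OF v] by blast
    have HE: "E *\<^sub>v a + K *\<^sub>v (E *\<^sub>v b) \<in> carrier_vec N" using Ec Kc a b by simp
    have "T *\<^sub>v (E *\<^sub>v a + K *\<^sub>v (E *\<^sub>v b)) = 0\<^sub>v N"
      using z unfolding vab M_def using assoc_mult_mat_vec[OF Tc Hc] v vab Hv[OF a b] by simp
    then have "E *\<^sub>v a + K *\<^sub>v (E *\<^sub>v b) = 0\<^sub>v N" by (rule Tz[OF HE])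
    then have "a = 0\<^sub>v n" "b = 0\<^sub>v n" using sep[OF a b] by auto
    then show ?thesis unfolding vab nn[symmetric] by (intro eq_vecI) auto
  qed
  obtain Mi where Mi: "Mi \<in> carrier_mat N N" "M * Mi = 1\<^sub>m N" using sq_inv[OF Mc Minj] by blast
  have span: "\<forall>v\<in>carrier_vec N. \<exists>w\<in>W. \<exists>w'\<in>W'. v = w + w'"
  proof
    fix v :: "'a vec" assume v: "v \<in> carrier_vec N"
    have u: "Mi *\<^sub>v v \<in> carrier_vec N" using Mi v by simp
    obtain a b where a: "a \<in> carrier_vec n" and b: "b \<in> carrier_vec n" and uab: "Mi *\<^sub>v v = a @\<^sub>v b" using split[OF u] by blast
    have "v = (M * Mi) *\<^sub>v v" using Mi v by simp
    also have "\<dots> = M *\<^sub>v (Mi *\<^sub>v v)" by (rule assoc_mult_mat_vec[OF Mc Mi(1) v])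
    also have "\<dots> = G1 *\<^sub>v a + G2 *\<^sub>v b" unfolding uab by (rule Mv[OF a b])
    finally show "\<exists>w\<in>W. \<exists>w'\<in>W'. v = w + w'" unfolding W_def W'_def using a b by blast
  qed
  define F where "F = (kron (Vform (2*l)) (Vform (2*k)) :: 'a mat)"
  have Fc: "F \<in> carrier_mat N N" unfolding F_def N_def by (rule kron_carrier[OF Vform_carrier Vform_carrier])
  have F1: "Vform (2*l) * P \<in> carrier_mat (2*l) (2*l)" by (rule mult_carrier_mat[OF Vform_carrier P(1)])
  have F2: "Vform (2*k) * Q \<in> carrier_mat (2*k) (2*k)" by (rule mult_carrier_mat[OF Vform_carrier Q(1)])
  have Phi: "transpose_mat T * (F * T) = kron (transpose_mat P * (Vform (2*l) * P)) (transpose_mat Q * (Vform (2*k) * Q))"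
  proof -
    have "F * T = kron (Vform (2*l) * P) (Vform (2*k) * Q)" unfolding F_def T_def
      by (rule kron_mult[OF Vform_carrier Vform_carrier P(1) Q(1)])
    moreover have "transpose_mat T = kron (transpose_mat P) (transpose_mat Q)" unfolding T_def
      by (rule kron_transpose[OF P(1) Q(1)])
    ultimately show ?thesis using kron_mult[OF transpose_carrier_mat[THEN iffD2, OF P(1)] transpose_carrier_mat[THEN iffD2, OF Q(1)] F1 F2] by simp
  qed
  have Phc1: "transpose_mat P * (Vform (2*l) * P) \<in> carrier_mat (2*l) (2*l)" by (rule mult_carrier_mat[OF transpose_carrier_mat[THEN iffD2, OF P(1)] F1])
  have Phc2: "transpose_mat Q * (Vform (2*k) * Q) \<in> carrier_mat (2*k) (2*k)" by (rule mult_carrier_mat[OF transpose_carrier_mat[THEN iffD2, OF Q(1)] F2])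
  have orth: "\<forall>w\<in>W. \<forall>w'\<in>W'. bil F w w' = 0"
  proof (intro ballI)
    fix w w' :: "'a vec" assume "w \<in> W" "w' \<in> W'"
    then obtain a b where a: "a \<in> carrier_vec n" and b: "b \<in> carrier_vec n"
      and wa: "w = T *\<^sub>v (E *\<^sub>v a)" and wb: "w' = T *\<^sub>v (K *\<^sub>v (E *\<^sub>v b))"
      unfolding W_def W'_def using G1v G2v by auto
    define z where "z = E *\<^sub>v a"
    define z' where "z' = K *\<^sub>v (E *\<^sub>v b)"
    have zc: "z \<in> carrier_vec N" unfolding z_def using Ec a by simp
    have zc': "z' \<in> carrier_vec N" unfolding z'_def using Kc Ec b by simp
    have y: "F *\<^sub>v (T *\<^sub>v z') \<in> carrier_vec N" using Fc Tc zc' by simp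
    have Tz': "T *\<^sub>v z \<in> carrier_vec N" using Tc zc by simp
    have "bil F w w' = (T *\<^sub>v z) \<bullet> (F *\<^sub>v (T *\<^sub>v z'))" unfolding bil_def wa wb z_def z'_def ..
    also have "\<dots> = (F *\<^sub>v (T *\<^sub>v z')) \<bullet> (T *\<^sub>v z)" by (rule comm_scalar_prod[OF Tz' y])
    also have "\<dots> = (transpose_mat T *\<^sub>v (F *\<^sub>v (T *\<^sub>v z'))) \<bullet> z"
      by (rule transpose_vec_mult_scalar[OF Tc zc y, symmetric])
    also have "\<dots> = z \<bullet> (transpose_mat T *\<^sub>v (F *\<^sub>v (T *\<^sub>v z')))"
      by (rule comm_scalar_prod) (use Tc y zc in auto)
    also have "transpose_mat T *\<^sub>v (F *\<^sub>v (T *\<^sub>v z')) = (transpose_mat T * (F * T)) *\<^sub>v z'"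
    proof -
      have TT: "transpose_mat T \<in> carrier_mat N N" using transpose_carrier_mat[THEN iffD2, OF Tc] .
      have FT: "F * T \<in> carrier_mat N N" using mult_carrier_mat[OF Fc Tc] .
      have "(transpose_mat T * (F * T)) *\<^sub>v z' = transpose_mat T *\<^sub>v ((F * T) *\<^sub>v z')"
        by (rule assoc_mult_mat_vec[OF TT FT zc'])
      also have "(F * T) *\<^sub>v z' = F *\<^sub>v (T *\<^sub>v z')" by (rule assoc_mult_mat_vec[OF Fc Tc zc'])
      finally show ?thesis by simp
    qed
    also have "z \<bullet> \<dots> = 0" unfolding Phi
    proof (rule ortho_core[OF k0 Phc1 Phc2 P(6) Q(6)])
      show "z \<in> carrier_vec (2*l*(2*k))" "z' \<in> carrier_vec (2*l*(2*k))" using zc zc' N_def by auto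
      show "\<And>t. t < 2*l*(2*k) \<Longrightarrow> \<not> inS l k t \<Longrightarrow> z $ t = 0" unfolding z_def using Esupp[OF a] N_def by auto
      show "\<And>t. t < 2*l*(2*k) \<Longrightarrow> inS l k t \<Longrightarrow> z' $ t = 0" unfolding z'_def using KEsupp[OF b] N_def by auto
    qed
    finally show "bil F w w' = 0" .
  qed
  show ?thesis
  proof (rule exI[of _ W], rule exI[of _ W'], intro conjI)
    show "submodule_of (kron (Vu (2*l)) (Vu (2*k)) :: 'a mat) W" using res1 unfolding U_def by simp
    show "submodule_of (kron (Vu (2*l)) (Vu (2*k)) :: 'a mat) W'" using res2 unfolding U_def by simp
    show "W \<inter> W' = {0\<^sub>v (2*l*(2*k))}" using inter unfolding N_def .
    show "\<forall>v\<in>carrier_vec (2*l*(2*k)). \<exists>w\<in>W. \<exists>w'\<in>W'. v = w + w'" using span unfolding N_def .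
    show "\<forall>w\<in>W. \<forall>w'\<in>W'. bil (kron (Vform (2*l)) (Vform (2*k))) w w' = 0" using orth unfolding F_def .
    show "module_iso (kron (Vu (2*l)) (Vu (2*k))) W (Ind2 (kron (Jblock l) (Jblock k)))" using res1 unfolding U_def C_def by simp
    show "module_iso (kron (Vu (2*l)) (Vu (2*k))) W' (Ind2 (kron (Jblock l) (Jblock k)))" using res2 unfolding U_def C_def by simp
  qed
qed

end
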